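(* Let $a\in\mathbb{N}_0$, $b\notin\mathbb{Z}$, and let $\check T=T(a,b)$ be the classical Jacobi operator. Its index sets are $\check I_1=\check I_4=\mathbb{N}_0$ and $\check I_2=\check I_3=\{0,1,\ldots,a-1\}$. The type 1 and type 4 quasi-rational eigenvalues are simple (i.e. $\mathrm{Ric}_\lambda(\check T)$ is a singleton of the respective type). The type 2 and 3 eigenvalues are degenerate and coincide: $\check\sigma_{23}:=\check\sigma_2=\check\sigma_3$, and for $\lambda\in\check\sigma_{23}$ the set $\mathrm{Ric}_\lambda(\check T)$ consists of exactly two elements, one of type 2 and one of type 3. Moreover $\sigma_{\mathrm{qr}}(\check T)=\check\sigma_1\sqcup\check\sigma_{23}\sqcup\check\sigma_4$ (disjoint union).
   Context: $D=d/dx$; $T(a,b)=(x^2-1)\big(D^2+(\frac{a+1}{x-1}+\frac{b+1}{x+1})D\big)$. For $T=pD^2+qD+r$, $\mathrm{Ric}_\lambda(T)$ is the set of rational $w$ with $p(w'+w^2)+qw+r=\lambda$ (log-derivatives of quasi-rational eigenfunctions $\phi$, $T\phi=\lambda\phi$, $\phi'/\phi=w$) and $\sigma_{\mathrm{qr}}(T)=\{\lambda:\mathrm{Ric}_\lambda(T)\ne\emptyset\}$. Asymptotic type of $w$ (and of $\phi$): 1 if $w$ regular at $x=\pm1$; 2 if poles at both; 3 if pole at $x=1$ only; 4 if pole at $x=-1$ only. Degree of $\phi$: $\lim_{x\to\infty}xw(x)$. The index of a type $\imath$ quasi-rational eigenfunction of $T(a,b)$ is $\deg\phi-d_\imath$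 with $d_1=0$, $d_2=-a-b$, $d_3=-a$, $d_4=-b$; $\check I_\imath$ is the set of indices of type $\imath$ eigenfunctions, and $\check\sigma_\imath=\lambda_\imath(\check I_\imath;a,b)$ with $\lambda_1(k;a,b)=k(k+a+b+1)$, $\lambda_2(k;a,b)=(k-a-b)(k+1)$, $\lambda_3(k;a,b)=(k-a)(k+b+1)$, $\lambda_4(k;a,b)=(k-b)(k+a+1)$ (the eigenvalue of a type $\imath$ eigenfunction of index $k$). *)

theory Defs
  imports "HOL-Computational_Algebra.Computational_Algebra" "HOL-Computational_Algebra.Field_as_Ring" "HOL-Analysis.Analysis"
begin

text \<open>The normalized (coprime, unit-normalized
  denominator) representation is given by quot_of_fract.\<close>

type_synonym rfun = "complex poly fract"

definition rnum :: "rfun \<Rightarrow> complex poly" where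
  "rnum w = fst (quot_of_fract w)"

definition rden :: "rfun \<Rightarrow> complex poly" where
  "rden w = snd (quot_of_fract w)"

text \<open>Evaluation of a rational function at a point (meaningful away from poles).\<close>
definition reval :: "rfun \<Rightarrow> complex \<Rightarrow> complex" where
  "reval w x = poly (rnum w) x / poly (rden w) x"

definition rderiv :: "rfun \<Rightarrow> rfun" where
  "rderiv w = to_fract (pderiv (rnum w) * rden w - rnum w * pderiv (rden w))
              / to_fract (rden w ^ 2)"

text \<open>A second order operator T = p D^2 + q D + r with polynomial coefficients,
  encoded as the triple (p, q, r).\<close>
type_synonym op2 = "complex poly \<times> complex poly \<times> complex poly"

definition Ric :: "op2 \<Rightarrow> complex \<Rightarrow> rfun set" where
  "Ric T ev = (case T of (p, q, r) \<Rightarrow>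
     {w. to_fract p * (rderiv w + w ^ 2) + to_fract q * w + to_fract r = to_fract [:ev:]})"

definition sigma_qr :: "op2 \<Rightarrow> complex set" where
  "sigma_qr T = {ev. Ric T ev \<noteq> {}}"

text \<open>The Jacobi operator T(a,b) = (x^2-1)(D^2 + ((a+1)/(x-1) + (b+1)/(x+1)) D),
  i.e. p = x^2 - 1, q = (a+b+2) x + (a-b), r = 0.\<close>
definition jacobiT :: "complex \<Rightarrow> complex \<Rightarrow> op2" where
  "jacobiT a b = ([:-1, 0, 1:], [:a - b, a + b + 2:], 0)"

definition has_pole_at :: "rfun \<Rightarrow> complex \<Rightarrow> bool" where
  "has_pole_at w c \<longleftrightarrow> poly (rden w) c = 0"

definition asym_type :: "rfun \<Rightarrow> nat" where
  "asym_type w =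
     (if \<not> has_pole_at w 1 \<and> \<not> has_pole_at w (-1) then 1
      else if has_pole_at w 1 \<and> has_pole_at w (-1) then 2
      else if has_pole_at w 1 then 3 else 4)"

text \<open>Degree of the quasi-rational function phi with phi'/phi = w: lim_{x\<rightarrow>\<infinity>} x w(x).\<close>
definition qr_degree :: "rfun \<Rightarrow> complex" where
  "qr_degree w = Lim at_infinity (\<lambda>x. x * reval w x)"

definition dshift :: "nat \<Rightarrow> complex \<Rightarrow> complex \<Rightarrow> complex" where
  "dshift i a b = (if i = 1 then 0 else if i = 2 then - a - b else if i = 3 then - a else - b)"

definition index_set :: "nat \<Rightarrow> complex \<Rightarrow> complex \<Rightarrow> complex set" where
  "index_set i a b = {qr_degree w - dshift i a b | w ev.
      w \<in> Ric (jacobiT a b) ev \<and> asym_type w = i}"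

definition lam :: "nat \<Rightarrow> complex \<Rightarrow> complex \<Rightarrow> complex \<Rightarrow> complex" where
  "lam i k a b = (if i = 1 then k * (k + a + b + 1)
      else if i = 2 then (k - a - b) * (k + 1)
      else if i = 3 then (k - a) * (k + b + 1)
      else (k - b) * (k + a + 1))"

definition sigma_check :: "nat \<Rightarrow> complex \<Rightarrow> complex \<Rightarrow> complex set" where
  "sigma_check i a b = (\<lambda>k. lam i k a b) ` index_set i a b"

end

theory Submission
  imports Defs
begin

lemma to_fract_div: "to_fract x / to_fract y = Fract x y"
  by (simp add: to_fract_def)

lemma rfr: "w = Fract (rnum w) (rden w)" "rden w \<noteq> 0"
  by (simp_all add: rnum_def rden_def)

lemma rnum_rel: "d \<noteq> 0 \<Longrightarrow> w = Fract n d \<Longrightarrow> rnum w * d = n * rden w"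
  by (metis eq_fract(1) rfr)

lemma rcoprime: "coprime (rnum w) (rden w)"
  by (simp add: rnum_def rden_def coprime_quot_of_fract)

lemma rden_dvd: "d \<noteq> 0 \<Longrightarrow> w = Fract n d \<Longrightarrow> rden w dvd d"
proof -
  assume "d \<noteq> 0" "w = Fract n d"
  then have "rden w dvd rnum w * d" using rnum_rel by (metis dvd_triv_right)
  then show ?thesis using rcoprime by (metis coprime_commute coprime_dvd_mult_right_iff)
qed

lemma rderiv_Fract: assumes "d \<noteq> 0"
  shows "rderiv (Fract n d) = Fract (pderiv n * d - n * pderiv d) (d^2)"
proof -
  define w where "w = Fract n d"
  define n0 where "n0 = rnum w"
  define d0 where "d0 = rden w"
  have d0: "d0 \<noteq> 0" using rfr d0_def by simp
  have e: "n0 * d = n * d0" using rnum_rel[OF assms w_def] n0_def d0_def by simp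
  have e': "n0 * pderiv d + d * pderiv n0 = n * pderiv d0 + d0 * pderiv n"
    using arg_cong[OF e, of pderiv] by (simp add: pderiv_mult)
  have key: "(pderiv n0 * d0 - n0 * pderiv d0) * d^2 = (pderiv n * d - n * pderiv d) * d0^2"
  proof -
    have "(pderiv n0 * d0 - n0 * pderiv d0) * d^2 = d0 * d * (d * pderiv n0) - pderiv d0 * d * (n0 * d)"
      by (simp add: algebra_simps power2_eq_square)
    also have "\<dots> = d0 * d * (n * pderiv d0 + d0 * pderiv n - n0 * pderiv d) - pderiv d0 * d * (n * d0)"
    proof -
      have h: "d * pderiv n0 = n * pderiv d0 + d0 * pderiv n - n0 * pderiv d" using e' by (simp add: algebra_simps)
      show ?thesis by (simp only: h e)
    qed
    also have "\<dots> = d0 * d * d0 * pderiv n - d0 * pderiv d * (n0 * d)"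
      by (simp add: algebra_simps)
    also have "\<dots> = (pderiv n * d - n * pderiv d) * d0^2"
      using e by (simp add: algebra_simps power2_eq_square)
    finally show ?thesis .
  qed
  show ?thesis
    unfolding rderiv_def w_def[symmetric] n0_def[symmetric] d0_def[symmetric] to_fract_div
    using key assms d0 by (simp add: eq_fract)
qed

definition pp :: "complex poly" where "pp = [:-1, 0, 1:]"
definition qq :: "complex \<Rightarrow> complex \<Rightarrow> complex poly" where "qq A B = [:A - B, A + B + 2:]"

lemma ric_Fract: assumes "d \<noteq> 0"
  shows "Fract n d \<in> Ric (jacobiT A B) ev \<longleftrightarrow>
    pp * (pderiv n * d - n * pderiv d + n^2) + qq A B * n * d = [:ev:] * d^2"
proof -
  have "to_fract pp * (rderiv (Fract n d) + (Fract n d)^2) + to_fract (qq A B) * Fract n d + to_fract 0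
     = Fract (pp * (pderiv n * d - n * pderiv d + n^2) + qq A B * n * d) (d^2)"
    using assms by (simp add: rderiv_Fract to_fract_def power2_eq_square eq_fract algebra_simps)
  moreover have "to_fract [:ev:] = Fract ([:ev:] * d^2) (d^2)"
    using assms by (simp add: to_fract_def eq_fract)
  moreover have "(X * d^2 = smult ev (d^4)) = (X = smult ev (d^2))" for X
  proof -
    have "smult ev (d ^ 4) = smult ev (d^2) * d^2" by (simp add: power_add[symmetric])
    then show ?thesis using assms by (metis mult_cancel_right power_not_zero)
  qed
  ultimately show ?thesis
    unfolding Ric_def jacobiT_def pp_def[symmetric] qq_def[symmetric]
    using assms by (simp add: eq_fract)
qed

lemma pp_fac: "pp = [:-1,1:] * [:1,1:]" by (simp add: pp_def)

lemma lin_prime: "prime_elem [:c, 1::complex:]"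
  by (rule prime_elem_linear_field_poly) simp

lemma lin_not_unit: "\<not> is_unit [:c, 1::complex:]"
  using lin_prime prime_elem_not_unit by blast

lemma coprime_lin: "poly Q c \<noteq> 0 \<Longrightarrow> coprime Q [:-c, 1::complex:]"
  by (metis coprime_commute lin_prime poly_eq_0_iff_dvd prime_elem_imp_coprime)

lemma coprime_pp: "poly Q 1 \<noteq> 0 \<Longrightarrow> poly Q (-1) \<noteq> 0 \<Longrightarrow> coprime Q pp"
  using coprime_lin[of Q 1] coprime_lin[of Q "-1"] unfolding pp_fac
  by (simp only: coprime_mult_right_iff) simp

lemma sq_not_dvd:
  fixes N D s :: "complex poly"
  assumes cop: "coprime N D" and dv: "D dvd (r * s) * (N - pderiv D)"
    and r: "r = [:-c, 1:]" and s: "poly s c \<noteq> 0"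
  shows "\<not> r^2 dvd D"
proof
  assume "r^2 dvd D"
  then obtain D1 where D1: "D = r^2 * D1" by blast
  obtain K where K: "(r * s) * (N - pderiv D) = D * K" using dv by blast
  have r0: "r \<noteq> 0" using r by simp
  have pr: "pderiv r = 1" using r by (simp add: pderiv_pCons)
  have dD: "pderiv D = r * (2 * D1 + r * pderiv D1)"
    unfolding D1 by (simp add: pderiv_mult power2_eq_square pr algebra_simps)
  have "r * (s * (N - pderiv D)) = r * (r * D1 * K)" using K D1 by (simp add: power2_eq_square algebra_simps)
  then have "s * (N - pderiv D) = r * D1 * K" using r0 by simp
  then have "poly (s * (N - pderiv D)) c = poly (r * D1 * K) c" by simp
  then have "poly s c * (poly N c - poly (pderiv D) c) = 0"
    using r by simp
  moreover have "poly (pderiv D) c = 0" using dD r by simp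
  ultimately have "poly N c = 0" using s by simp
  then have "r dvd N" using r poly_eq_0_iff_dvd by blast
  moreover have "r dvd D" using D1 by (simp add: power2_eq_square)
  ultimately have "is_unit r" using cop coprime_common_divisor by blast
  then show False using r lin_not_unit by blast
qed

definition redeq :: "complex \<Rightarrow> complex \<Rightarrow> complex \<Rightarrow> complex poly \<Rightarrow> complex poly \<Rightarrow> bool" where
  "redeq A B ev Q m \<longleftrightarrow> pp * (pp * pderiv (pderiv Q) + (2 * m + qq A B) * pderiv Q)
      + Q * (pderiv m * pp - m * pderiv pp + m^2 + qq A B * m) = [:ev:] * pp * Q"

lemma ric_red:
  assumes "Q \<noteq> 0"
  shows "Fract (pp * pderiv Q + m * Q) (pp * Q) \<in> Ric (jacobiT A B) ev \<longleftrightarrow> redeq A B ev Q m"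
proof -
  have pp0: "pp \<noteq> 0" by (simp add: pp_def)
  let ?n = "pp * pderiv Q + m * Q" and ?d = "pp * Q"
  let ?L = "pp * (pp * pderiv (pderiv Q) + (2 * m + qq A B) * pderiv Q)
      + Q * (pderiv m * pp - m * pderiv pp + m^2 + qq A B * m)"
  have id: "pp * (pderiv ?n * ?d - ?n * pderiv ?d + ?n^2) + qq A B * ?n * ?d - [:ev:] * ?d^2
     = (pp * Q) * (?L - [:ev:] * pp * Q)"
    by (simp add: pderiv_mult pderiv_add power2_eq_square algebra_simps)
  have "Fract ?n ?d \<in> Ric (jacobiT A B) ev \<longleftrightarrow>
     pp * (pderiv ?n * ?d - ?n * pderiv ?d + ?n^2) + qq A B * ?n * ?d = [:ev:] * ?d^2"
    using assms pp0 by (intro ric_Fract) simp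
  also have "\<dots> \<longleftrightarrow> (pp * Q) * (?L - [:ev:] * pp * Q) = 0"
    using id by (metis eq_iff_diff_eq_0)
  also have "\<dots> \<longleftrightarrow> ?L = [:ev:] * pp * Q" using assms pp0 by simp
  finally show ?thesis unfolding redeq_def .
qed

lemma classify0:
  assumes w: "w \<in> Ric (jacobiT A B) ev"
  shows "\<exists>Q m. Q \<noteq> 0 \<and> poly Q 1 \<noteq> 0 \<and> poly Q (-1) \<noteq> 0 \<and>
     w = Fract (pp * pderiv Q + m * Q) (pp * Q) \<and> redeq A B ev Q m"
proof -
  define N where "N = rnum w"
  define D where "D = rden w"
  have D0: "D \<noteq> 0" and wND: "w = Fract N D" using rfr N_def D_def by auto
  have cop: "coprime N D" using rcoprime N_def D_def by simp
  have R: "pp * (pderiv N * D - N * pderiv D + N^2) + qq A B * N * D = [:ev:] * D^2"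
    using w ric_Fract[OF D0] wND by simp
  have "N * (pp * (N - pderiv D)) = [:ev:] * D^2 - pp * pderiv N * D - qq A B * N * D"
    using R by (simp add: algebra_simps power2_eq_square)
  also have "\<dots> = D * ([:ev:] * D - pp * pderiv N - qq A B * N)"
    by (simp add: algebra_simps power2_eq_square)
  finally have "D dvd N * (pp * (N - pderiv D))" by (metis dvd_triv_left)
  then have S1: "D dvd pp * (N - pderiv D)"
    using cop by (simp add: coprime_commute coprime_dvd_mult_right_iff)
  define r1 where "r1 = [:-1, 1::complex:]"
  define r2 where "r2 = [:1, 1::complex:]"
  have ppr: "pp = r1 * r2" using pp_fac r1_def r2_def by simp
  have nsq1: "\<not> r1^2 dvd D"
    by (rule sq_not_dvd[OF cop, of r1 r2 1]) (use S1 ppr r1_def r2_def in simp_all)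
  have nsq2: "\<not> r2^2 dvd D"
    by (rule sq_not_dvd[OF cop, of r2 r1 "-1"]) (use S1 ppr r1_def r2_def in \<open>simp_all add: mult.commute\<close>)
  have r1D: "r1 dvd D \<longleftrightarrow> poly D 1 = 0" using poly_eq_0_iff_dvd[of D 1] r1_def by simp
  have r2D: "r2 dvd D \<longleftrightarrow> poly D (-1) = 0" using dvd_iff_poly_eq_0[of 1 D] r2_def by simp
  have cop12: "coprime r1 r2" using coprime_lin[of r1 "-1"] r1_def r2_def by simp
  define E where "E = (if poly D 1 = 0 then r1 else 1) * (if poly D (-1) = 0 then r2 else 1)"
  define F where "F = (if poly D 1 = 0 then 1 else r1) * (if poly D (-1) = 0 then 1 else r2)"
  have EF: "E * F = pp" unfolding E_def F_def ppr by (cases "poly D 1 = 0"; cases "poly D (-1) = 0") (simp_all add: mult.commute)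
  have F0: "F \<noteq> 0" using EF by (auto simp: pp_def)
  have ED: "E dvd D"
    unfolding E_def using r1D r2D cop12 divides_mult[of r1 D r2] by (cases "poly D 1 = 0"; cases "poly D (-1) = 0") simp_all
  define Q where "Q = D div E"
  have DEQ: "D = E * Q" using ED Q_def by simp
  have Q0: "Q \<noteq> 0" using DEQ D0 by auto
  have Q1: "poly Q 1 \<noteq> 0"
  proof
    assume "poly Q 1 = 0"
    then have "r1 dvd Q" using poly_eq_0_iff_dvd[of Q 1] r1_def by simp
    moreover have "poly D 1 = 0" using DEQ \<open>poly Q 1 = 0\<close> by simp
    moreover have "r1 dvd E" unfolding E_def using \<open>poly D 1 = 0\<close> by simp
    ultimately have "r1 * r1 dvd E * Q" by (simp add: mult_dvd_mono)
    then show False using nsq1 DEQ by (simp add: power2_eq_square)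
  qed
  have Q2: "poly Q (-1) \<noteq> 0"
  proof
    assume "poly Q (-1) = 0"
    then have "r2 dvd Q" using dvd_iff_poly_eq_0[of 1 Q] r2_def by simp
    moreover have "poly D (-1) = 0" using DEQ \<open>poly Q (-1) = 0\<close> by simp
    moreover have "r2 dvd E" unfolding E_def using \<open>poly D (-1) = 0\<close> by simp
    ultimately have "r2 * r2 dvd E * Q" by (simp add: mult_dvd_mono)
    then show False using nsq2 DEQ by (simp add: power2_eq_square)
  qed
  have "Q dvd pp * (N - pderiv D)" using S1 DEQ by (metis dvd_mult_right dvd_trans)
  then have "Q dvd N - pderiv D"
    using coprime_pp[OF Q1 Q2] by (simp add: coprime_dvd_mult_right_iff)
  then have "Q dvd (N - pderiv D) + pderiv E * Q" by simp
  moreover have "(N - pderiv D) + pderiv E * Q = N - E * pderiv Q"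
    unfolding DEQ by (simp add: pderiv_mult algebra_simps)
  ultimately have "Q dvd F * (N - E * pderiv Q)" by simp
  moreover have "F * (N - E * pderiv Q) = F * N - pp * pderiv Q" using EF by (simp add: algebra_simps)
  ultimately have "Q dvd F * N - pp * pderiv Q" by simp
  then obtain m where m: "F * N - pp * pderiv Q = Q * m" by blast
  have FN: "F * N = pp * pderiv Q + m * Q" using m by (simp add: algebra_simps)
  have FD: "F * D = pp * Q" using DEQ EF by (simp add: algebra_simps)
  have ww: "w = Fract (pp * pderiv Q + m * Q) (pp * Q)"
    unfolding wND FN[symmetric] FD[symmetric] using F0 D0 by (simp add: eq_fract)
  have "redeq A B ev Q m" using w ww ric_red[OF Q0] by simp
  then show ?thesis using Q0 Q1 Q2 ww by blast
qed

lemma deg_pp: "degree pp = 2" by (simp add: pp_def)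
lemma deg_qq: "degree (qq A B) \<le> 1" by (simp add: qq_def)
lemma deg_dpp: "degree (pderiv pp) \<le> 1" by (simp add: pp_def pderiv_pCons)

lemma dml: "degree p \<le> a \<Longrightarrow> degree q \<le> b \<Longrightarrow> degree (p * q) \<le> a + b"
  by (meson add_mono degree_mult_le order_trans)

lemma redeq_deg:
  assumes r: "redeq A B ev Q m" and Q0: "Q \<noteq> 0"
  shows "degree m \<le> 1"
proof (rule ccontr)
  assume "\<not> degree m \<le> 1"
  then have d2: "degree m \<ge> 2" by simp
  define k where "k = degree Q"
  define d where "d = degree m"
  have m0: "m \<noteq> 0" using d2 by auto
  let ?T1 = "[:ev:] * pp * Q"
  let ?T2 = "pp * (pp * pderiv (pderiv Q))"
  let ?T3 = "pp * ((2 * m + qq A B) * pderiv Q)"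
  let ?T4 = "Q * (pderiv m * pp - m * pderiv pp + qq A B * m)"
  have eq: "Q * m^2 = ?T1 - ?T2 - ?T3 - ?T4"
    using r unfolding redeq_def by (simp add: algebra_simps)
  have b1: "degree ?T1 \<le> k + d + 1"
  proof -
    have "degree ?T1 \<le> (0 + 2) + k"
      by (intro dml) (auto simp: deg_pp k_def)
    then show ?thesis using d2 d_def by simp
  qed
  have b2: "degree ?T2 \<le> k + d + 1"
  proof (cases "k \<ge> 2")
    case False
    then have "degree (pderiv Q) = 0" using k_def by (simp add: degree_pderiv)
    then have "pderiv (pderiv Q) = 0" by (simp add: pderiv_eq_0_iff)
    then show ?thesis by simp
  next
    case True
    have "degree ?T2 \<le> 2 + (2 + (k - 1 - 1))"
      by (intro dml) (auto simp: deg_pp k_def degree_pderiv)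
    then show ?thesis using True d2 d_def by simp
  qed
  have b3: "degree ?T3 \<le> k + d + 1"
  proof (cases "k \<ge> 1")
    case False
    then have "pderiv Q = 0" using k_def by (simp add: pderiv_eq_0_iff)
    then show ?thesis by simp
  next
    case True
    have "degree (2 * m) \<le> 0 + d" by (intro dml) (auto simp: d_def)
    moreover have "degree (qq A B) \<le> d" using deg_qq d2 d_def by (meson le_trans one_le_numeral order.trans)
    ultimately have "degree (2 * m + qq A B) \<le> d" by (simp add: degree_add_le)
    then have "degree ?T3 \<le> 2 + (d + (k - 1))"
      by (intro dml) (auto simp: deg_pp k_def degree_pderiv)
    then show ?thesis using True by simp
  qed
  have b4: "degree ?T4 \<le> k + d + 1"
  proof -
    have "degree (pderiv m * pp) \<le> (d - 1) + 2" by (intro dml) (auto simp: deg_pp d_def degree_pderiv)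
    then have c1: "degree (pderiv m * pp) \<le> d + 1" using d2 d_def by simp
    have c2: "degree (m * pderiv pp) \<le> d + 1" by (intro dml) (use deg_dpp in \<open>auto simp: d_def\<close>)
    have "degree (qq A B * m) \<le> 1 + d" by (intro dml) (use deg_qq in \<open>auto simp: d_def\<close>)
    then have c3: "degree (qq A B * m) \<le> d + 1" by simp
    have "degree (pderiv m * pp - m * pderiv pp + qq A B * m) \<le> d + 1"
      using c1 c2 c3 by (simp add: degree_add_le degree_diff_le)
    then have "degree ?T4 \<le> k + (d + 1)" by (intro dml) (auto simp: k_def)
    then show ?thesis by simp
  qed
  have "degree (?T1 - ?T2 - ?T3 - ?T4) \<le> k + d + 1"
    using b1 b2 b3 b4 by (simp add: degree_diff_le)
  moreover have "degree (Q * m^2) = k + 2 * d"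
    using Q0 m0 k_def d_def by (simp add: degree_mult_eq degree_power_eq)
  ultimately show False using eq d2 d_def by simp
qed

lemma redeq_at1:
  assumes r: "redeq A B ev Q m" and Q1: "poly Q 1 \<noteq> 0"
  shows "poly m 1 * (poly m 1 + 2 * A) = 0"
proof -
  have "poly (pp * (pp * pderiv (pderiv Q) + (2 * m + qq A B) * pderiv Q)
      + Q * (pderiv m * pp - m * pderiv pp + m^2 + qq A B * m)) 1 = poly ([:ev:] * pp * Q) 1"
    using r unfolding redeq_def by simp
  then have "poly Q 1 * (poly m 1 * (poly m 1 + 2 * A)) = 0"
    by (simp add: pp_def qq_def pderiv_pCons algebra_simps power2_eq_square)
  then show ?thesis using Q1 by simp
qed

lemma redeq_atm1:
  assumes r: "redeq A B ev Q m" and Q1: "poly Q (-1) \<noteq> 0"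
  shows "poly m (-1) * (poly m (-1) - 2 * B) = 0"
proof -
  have "poly (pp * (pp * pderiv (pderiv Q) + (2 * m + qq A B) * pderiv Q)
      + Q * (pderiv m * pp - m * pderiv pp + m^2 + qq A B * m)) (-1) = poly ([:ev:] * pp * Q) (-1)"
    using r unfolding redeq_def by simp
  then have "poly Q (-1) * (poly m (-1) * (poly m (-1) - 2 * B)) = 0"
    by (simp add: pp_def qq_def pderiv_pCons algebra_simps power2_eq_square)
  then show ?thesis using Q1 by simp
qed

definition mty :: "complex \<Rightarrow> complex \<Rightarrow> nat \<Rightarrow> complex poly" where
  "mty A B i = (if i = 1 then 0 else if i = 2 then [:B - A, - A - B:] else if i = 3 then [:-A, -A:] else [:B, -B:])"

definition wQ :: "complex \<Rightarrow> complex \<Rightarrow> nat \<Rightarrow> complex poly \<Rightarrow> rfun" where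
  "wQ A B i Q = Fract (pp * pderiv Q + mty A B i * Q) (pp * Q)"

definition al :: "complex \<Rightarrow> nat \<Rightarrow> complex" where
  "al A i = (if i = 1 \<or> i = 4 then A else - A)"
definition be :: "complex \<Rightarrow> nat \<Rightarrow> complex" where
  "be B i = (if i = 1 \<or> i = 3 then B else - B)"
definition kap :: "complex \<Rightarrow> complex \<Rightarrow> nat \<Rightarrow> complex" where
  "kap A B i = (if i = 1 then 0 else if i = 2 then - A - B else if i = 3 then - A * (B + 1) else - B * (A + 1))"

definition Jop :: "complex \<Rightarrow> complex \<Rightarrow> complex poly \<Rightarrow> complex poly" where
  "Jop \<alpha> \<beta> Q = pp * pderiv (pderiv Q) + [:\<alpha> - \<beta>, \<alpha> + \<beta> + 2:] * pderiv Q"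

lemma mty_facts:
  assumes "i \<in> {1,2,3,4}"
  shows "2 * mty A B i + qq A B = [:al A i - be B i, al A i + be B i + 2:]"
    and "pderiv (mty A B i) * pp - mty A B i * pderiv pp + (mty A B i)^2 + qq A B * mty A B i = smult (kap A B i) pp"
proof -
  show "2 * mty A B i + qq A B = [:al A i - be B i, al A i + be B i + 2:]"
    by (rule poly_eq_poly_eq_iff[THEN iffD1], rule ext)
      (use assms in \<open>auto simp: mty_def al_def be_def qq_def algebra_simps\<close>)
  show "pderiv (mty A B i) * pp - mty A B i * pderiv pp + (mty A B i)^2 + qq A B * mty A B i = smult (kap A B i) pp"
    by (rule poly_eq_poly_eq_iff[THEN iffD1], rule ext)
      (use assms in \<open>auto simp: mty_def kap_def qq_def pp_def pderiv_pCons power2_eq_square algebra_simps\<close>)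
qed

lemma redeq_iff_J:
  assumes "i \<in> {1,2,3,4}"
  shows "redeq A B ev Q (mty A B i) \<longleftrightarrow> Jop (al A i) (be B i) Q = smult (ev - kap A B i) Q"
proof -
  have pp0: "pp \<noteq> 0" by (simp add: pp_def)
  have "redeq A B ev Q (mty A B i) \<longleftrightarrow>
     pp * (Jop (al A i) (be B i) Q) + Q * smult (kap A B i) pp = [:ev:] * pp * Q"
    unfolding redeq_def Jop_def using mty_facts[OF assms] by simp
  also have "\<dots> \<longleftrightarrow> pp * (Jop (al A i) (be B i) Q - smult (ev - kap A B i) Q) = 0"
    by (simp add: algebra_simps smult_diff_left)
  also have "\<dots> \<longleftrightarrow> Jop (al A i) (be B i) Q = smult (ev - kap A B i) Q" using pp0 by simp
  finally show ?thesis .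
qed

lemma lin_eq: "degree m \<le> 1 \<Longrightarrow> m = [:coeff m 0, coeff m 1:]"
  by (rule poly_eqI) (auto simp: coeff_pCons coeff_eq_0 split: nat.split)

lemma solve2: "(c0::complex) + c1 = u \<Longrightarrow> c0 - c1 = v \<Longrightarrow> c0 = (u+v)/2 \<and> c1 = (u-v)/2"
  by (auto simp: field_simps)

lemma classify:
  assumes w: "w \<in> Ric (jacobiT A B) ev"
  shows "\<exists>i Q. i \<in> {1,2,3,4} \<and> Q \<noteq> 0 \<and> poly Q 1 \<noteq> 0 \<and> poly Q (-1) \<noteq> 0 \<and>
     (i = 2 \<or> i = 3 \<longrightarrow> A \<noteq> 0) \<and> w = wQ A B i Q \<and>
     Jop (al A i) (be B i) Q = smult (ev - kap A B i) Q"
proof -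
  obtain Q m where Q0: "Q \<noteq> 0" and Q1: "poly Q 1 \<noteq> 0" and Q2: "poly Q (-1) \<noteq> 0"
    and ww: "w = Fract (pp * pderiv Q + m * Q) (pp * Q)" and r: "redeq A B ev Q m"
    using classify0[OF w] by blast
  have dm: "degree m \<le> 1" using redeq_deg[OF r Q0] .
  define c0 where "c0 = coeff m 0"
  define c1 where "c1 = coeff m 1"
  have mc: "m = [:c0, c1:]" using lin_eq[OF dm] c0_def c1_def by simp
  have u: "(c0 + c1) * (c0 + c1 + 2 * A) = 0" using redeq_at1[OF r Q1] mc by simp
  have v: "(c0 - c1) * (c0 - c1 - 2 * B) = 0" using redeq_atm1[OF r Q2] mc by simp
  have "\<exists>i. i \<in> {1,2,3,4} \<and> (i = 2 \<or> i = 3 \<longrightarrow> A \<noteq> 0) \<and> m = mty A B i"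
  proof (cases "c0 + c1 = 0")
    case True
    show ?thesis
    proof (cases "c0 - c1 = 0")
      case True
      then have "m = mty A B 1" using \<open>c0 + c1 = 0\<close> mc by (simp add: mty_def)
      then show ?thesis by (intro exI[of _ 1]) simp
    next
      case False
      then have "c0 - c1 = 2 * B" using v by simp
      then have "m = mty A B 4" using solve2[OF \<open>c0 + c1 = 0\<close>] mc
        by (simp add: mty_def)
      then show ?thesis by (intro exI[of _ 4]) simp
    qed
  next
    case False
    then have "c0 + c1 + 2 * A = 0" using u by simp
    then have cA: "c0 + c1 = - 2 * A" by (simp add: eq_neg_iff_add_eq_0)
    then have A0: "A \<noteq> 0" using False by auto
    show ?thesis
    proof (cases "c0 - c1 = 0")
      case True
      then have "m = mty A B 3" using solve2[OF cA] mc by (simp add: mty_def)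
      then show ?thesis using A0 by (intro exI[of _ 3]) simp
    next
      case False
      then have "c0 - c1 = 2 * B" using v by simp
      have "2 * c0 = (c0 + c1) + (c0 - c1)" by simp
      also have "\<dots> = 2 * (B - A)" using cA \<open>c0 - c1 = 2 * B\<close> by (simp add: algebra_simps)
      finally have "2 * c0 = 2 * (B - A)" .
      then have e0: "c0 = B - A" by (metis mult_left_cancel zero_neq_numeral)
      have "2 * c1 = (c0 + c1) - (c0 - c1)" by simp
      also have "\<dots> = 2 * (- A - B)" using cA \<open>c0 - c1 = 2 * B\<close> by (simp add: algebra_simps)
      finally have "2 * c1 = 2 * (- A - B)" .
      then have e1: "c1 = - A - B" by (metis mult_left_cancel zero_neq_numeral)
      have "m = mty A B 2" using e0 e1 mc by (simp add: mty_def)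
      then show ?thesis using A0 by (intro exI[of _ 2]) simp
    qed
  qed
  then obtain i where i: "i \<in> {1,2,3,4}" "i = 2 \<or> i = 3 \<longrightarrow> A \<noteq> 0" "m = mty A B i" by blast
  have "Jop (al A i) (be B i) Q = smult (ev - kap A B i) Q"
    using r redeq_iff_J[OF i(1)] i(3) by simp
  then show ?thesis using i Q0 Q1 Q2 ww unfolding wQ_def
    by (intro exI[of _ i] exI[of _ Q]) simp
qed

lemma rden_poly_nz: "d \<noteq> 0 \<Longrightarrow> w = Fract n d \<Longrightarrow> poly d c \<noteq> 0 \<Longrightarrow> poly (rden w) c \<noteq> 0"
  using rden_dvd by (metis dvd_def mult_eq_0_iff poly_mult)

lemma pole_iff:
  assumes Q0: "Q \<noteq> 0" and Qc: "poly Q c \<noteq> 0" and r: "r = [:-c, 1:]" and ps: "pp = r * s"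
    and sc: "poly s c \<noteq> 0"
  shows "has_pole_at (Fract (pp * pderiv Q + m * Q) (pp * Q)) c \<longleftrightarrow> poly m c \<noteq> 0"
proof
  assume h: "has_pole_at (Fract (pp * pderiv Q + m * Q) (pp * Q)) c"
  show "poly m c \<noteq> 0"
  proof
    assume "poly m c = 0"
    then obtain m1 where m1: "m = r * m1" using r poly_eq_0_iff_dvd by blast
    have r0: "r \<noteq> 0" using r by simp
    have s0: "s \<noteq> 0" using sc by auto
    have "Fract (pp * pderiv Q + m * Q) (pp * Q) = Fract (r * (s * pderiv Q + m1 * Q)) (r * (s * Q))"
      unfolding ps m1 by (simp add: algebra_simps)
    also have "\<dots> = Fract (s * pderiv Q + m1 * Q) (s * Q)"
      using r0 s0 Q0 by (simp add: eq_fract)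
    finally have "poly (rden (Fract (pp * pderiv Q + m * Q) (pp * Q))) c \<noteq> 0"
      using rden_poly_nz[of "s * Q"] s0 Q0 sc Qc by simp
    then show False using h unfolding has_pole_at_def by simp
  qed
next
  assume mc: "poly m c \<noteq> 0"
  define w where "w = Fract (pp * pderiv Q + m * Q) (pp * Q)"
  have pp0: "pp \<noteq> 0" by (simp add: pp_def)
  have e: "rnum w * (pp * Q) = (pp * pderiv Q + m * Q) * rden w"
    using rnum_rel[of "pp * Q" w] pp0 Q0 w_def by simp
  have ppc: "poly pp c = 0" unfolding ps r by simp
  have "poly (rnum w * (pp * Q)) c = poly ((pp * pderiv Q + m * Q) * rden w) c" using e by simp
  then have "poly m c * poly Q c * poly (rden w) c = 0" using ppc by simp
  then have "poly (rden w) c = 0" using mc Qc by simp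
  then show "has_pole_at w c" unfolding has_pole_at_def .
qed

lemma asym_wQ:
  assumes i: "i \<in> {1,2,3,4}" and Q0: "Q \<noteq> 0" and Q1: "poly Q 1 \<noteq> 0" and Q2: "poly Q (-1) \<noteq> 0"
    and A0: "i = 2 \<or> i = 3 \<longrightarrow> A \<noteq> 0" and B0: "B \<noteq> 0"
  shows "asym_type (wQ A B i Q) = i"
proof -
  have h1: "has_pole_at (wQ A B i Q) 1 \<longleftrightarrow> poly (mty A B i) 1 \<noteq> 0"
    unfolding wQ_def by (rule pole_iff[OF Q0 Q1, of "[:-1,1:]" "[:1,1:]"]) (auto simp: pp_def)
  have h2: "has_pole_at (wQ A B i Q) (-1) \<longleftrightarrow> poly (mty A B i) (-1) \<noteq> 0"
    unfolding wQ_def by (rule pole_iff[OF Q0 Q2, of "[:1,1:]" "[:-1,1:]"]) (auto simp: pp_def)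
  show ?thesis using i A0 B0 unfolding asym_type_def h1 h2 by (auto simp: mty_def)
qed

definition Gop :: "complex \<Rightarrow> complex \<Rightarrow> complex \<Rightarrow> complex \<Rightarrow> complex poly \<Rightarrow> complex poly" where
  "Gop s t0 u v P = [:t0, s, 1:] * pderiv (pderiv P) + [:v, u:] * pderiv P"

lemma coeff_Gop:
  "coeff (Gop s t0 u v P) j = (of_nat j * (of_nat j - 1) + u * of_nat j) * coeff P j
     + of_nat (j + 1) * (s * of_nat j + v) * coeff P (Suc j)
     + t0 * of_nat (j + 1) * of_nat (j + 2) * coeff P (Suc (Suc j))"
proof (cases j)
  case 0
  then show ?thesis by (simp add: Gop_def coeff_pderiv algebra_simps)
next
  case (Suc i)
  then show ?thesis
  proof (cases i)
    case 0
    then show ?thesis using Suc by (simp add: Gop_def coeff_pderiv algebra_simps)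
  next
    case (Suc l)
    then show ?thesis using \<open>j = Suc i\<close> by (simp add: Gop_def coeff_pderiv algebra_simps)
  qed
qed

lemma Jop_Gop: "Jop \<alpha> \<beta> Q = Gop 0 (-1) (\<alpha> + \<beta> + 2) (\<alpha> - \<beta>) Q"
  by (simp add: Jop_def Gop_def pp_def)

lemma pderiv_shift: "pderiv (pcompose Q [:c, 1:]) = pcompose (pderiv Q) [:c, 1:]"
  by (simp add: pderiv_pcompose pderiv_pCons)

lemma Jop_shift1: "pcompose (Jop \<alpha> \<beta> Q) [:1, 1:] = Gop 2 0 (\<alpha> + \<beta> + 2) (2 * \<alpha> + 2) (pcompose Q [:1, 1:])"
  by (rule poly_eq_poly_eq_iff[THEN iffD1], rule ext)
     (simp add: Jop_def Gop_def pp_def pderiv_shift poly_pcompose algebra_simps)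

lemma Jop_shiftm1: "pcompose (Jop \<alpha> \<beta> Q) [:-1, 1:] = Gop (-2) 0 (\<alpha> + \<beta> + 2) (- 2 * \<beta> - 2) (pcompose Q [:-1, 1:])"
  by (rule poly_eq_poly_eq_iff[THEN iffD1], rule ext)
     (simp add: Jop_def Gop_def pp_def pderiv_shift poly_pcompose algebra_simps)

lemma one_plus_nat_nz[simp]: "(1::complex) + of_nat j \<noteq> 0"
proof -
  have "(1::complex) + of_nat j = of_nat (Suc j)" by simp
  then show ?thesis by (metis of_nat_eq_0_iff nat.distinct(1))
qed

lemma down_nz:
  fixes c :: "nat \<Rightarrow> complex"
  assumes rec: "\<And>j. j < k \<Longrightarrow> A j * c j + B j * c (Suc j) = 0"
    and An: "\<And>j. j < k \<Longrightarrow> A j \<noteq> 0" and Bn: "\<And>j. j < k \<Longrightarrow> B j \<noteq> 0" and ck: "c k \<noteq> 0"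
  shows "c 0 \<noteq> 0"
proof -
  have "\<forall>i. i \<le> k \<longrightarrow> c (k - i) \<noteq> 0"
  proof
    fix i show "i \<le> k \<longrightarrow> c (k - i) \<noteq> 0"
    proof (induction i)
      case 0 then show ?case using ck by simp
    next
      case (Suc i)
      show ?case
      proof
        assume le: "Suc i \<le> k"
        define j where "j = k - Suc i"
        have jk: "j < k" and sj: "Suc j = k - i" using le j_def by auto
        have "c (Suc j) \<noteq> 0" using Suc le sj by simp
        then have "A j * c j \<noteq> 0" using rec[OF jk] Bn[OF jk] by (metis add_eq_0_iff_both_eq_0 add_cancel_right_left mult_eq_0_iff)
        then show "c (k - Suc i) \<noteq> 0" using j_def by simp
      qed
    qed
  qed
  then show ?thesis by (metis diff_self_eq_0 order_refl)
qed

lemma down_z: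
  fixes c :: "nat \<Rightarrow> complex"
  assumes rec: "\<And>j. j < k \<Longrightarrow> A j * c j + B j * c (Suc j) = 0"
    and An: "\<And>j. j < k \<Longrightarrow> A j \<noteq> 0" and i0: "i0 < k" and B0: "B i0 = 0"
  shows "c 0 = 0"
proof -
  have "\<forall>n. n \<le> i0 \<longrightarrow> c (i0 - n) = 0"
  proof
    fix n show "n \<le> i0 \<longrightarrow> c (i0 - n) = 0"
    proof (induction n)
      case 0 then show ?case using rec[OF i0] An[OF i0] B0 by simp
    next
      case (Suc n)
      show ?case
      proof
        assume le: "Suc n \<le> i0"
        define j where "j = i0 - Suc n"
        have jk: "j < k" and sj: "Suc j = i0 - n" using le j_def i0 by auto
        have "c (Suc j) = 0" using Suc le sj by simp
        then have "A j * c j = 0" using rec[OF jk] by simp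
        then show "c (i0 - Suc n) = 0" using An[OF jk] j_def by simp
      qed
    qed
  qed
  then show ?thesis by (metis diff_self_eq_0 order_refl)
qed

lemma Gop_rec:
  assumes "Gop s 0 u v P = smult \<mu> P"
  shows "(of_nat j * (of_nat j - 1) + u * of_nat j - \<mu>) * coeff P j
     + (of_nat (j + 1) * (s * of_nat j + v)) * coeff P (Suc j) = 0"
proof -
  have "coeff (Gop s 0 u v P) j = \<mu> * coeff P j" using assms by simp
  then show ?thesis unfolding coeff_Gop by (simp add: algebra_simps)
qed

lemma Gop_coeff0:
  assumes G: "Gop s 0 u v P = smult \<mu> P" and P0: "P \<noteq> 0"
    and An: "\<And>j. j < degree P \<Longrightarrow> of_nat j * (of_nat j - 1) + u * of_nat j - \<mu> \<noteq> 0"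
  shows "coeff P 0 = 0 \<longleftrightarrow> (\<exists>j < degree P. s * of_nat j + v = 0)"
proof
  assume c0: "coeff P 0 = 0"
  show "\<exists>j < degree P. s * of_nat j + v = 0"
  proof (rule ccontr)
    assume "\<not> ?thesis"
    then have Bn: "\<And>j. j < degree P \<Longrightarrow> of_nat (j + 1) * (s * of_nat j + v) \<noteq> 0" by simp
    have "coeff P 0 \<noteq> 0"
      by (rule down_nz[where k="degree P" and c="coeff P"
            and A="\<lambda>j. of_nat j * (of_nat j - 1) + u * of_nat j - \<mu>"
            and B="\<lambda>j. of_nat (j + 1) * (s * of_nat j + v)", OF Gop_rec[OF G] An Bn]) (use P0 in simp_all)
    then show False using c0 by simp
  qed
next
  assume "\<exists>j < degree P. s * of_nat j + v = 0"
  then obtain j where j: "j < degree P" "s * of_nat j + v = 0" by blast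
  show "coeff P 0 = 0"
    by (rule down_z[where k="degree P" and c="coeff P"
            and A="\<lambda>j. of_nat j * (of_nat j - 1) + u * of_nat j - \<mu>"
            and B="\<lambda>j. of_nat (j + 1) * (s * of_nat j + v)", OF Gop_rec[OF G] An j(1)]) (use j in simp_all)
qed

lemma Jop_eig:
  assumes J: "Jop \<alpha> \<beta> Q = smult \<mu> Q" and Q0: "Q \<noteq> 0"
  shows "\<mu> = of_nat (degree Q) * (of_nat (degree Q) + \<alpha> + \<beta> + 1)"
proof -
  let ?k = "degree Q"
  have "coeff (Jop \<alpha> \<beta> Q) ?k = \<mu> * coeff Q ?k" using J by simp
  then have "(of_nat ?k * (of_nat ?k - 1) + (\<alpha> + \<beta> + 2) * of_nat ?k) * coeff Q ?k = \<mu> * coeff Q ?k"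
    unfolding Jop_Gop coeff_Gop by (simp add: coeff_eq_0)
  then have "of_nat ?k * (of_nat ?k - 1) + (\<alpha> + \<beta> + 2) * of_nat ?k = \<mu>" using Q0 by simp
  then show ?thesis by (simp add: algebra_simps)
qed

lemma An_fact:
  fixes \<alpha> \<beta> \<mu> :: complex
  assumes "\<mu> = of_nat k * (of_nat k + \<alpha> + \<beta> + 1)"
  shows "of_nat j * (of_nat j - 1) + (\<alpha> + \<beta> + 2) * of_nat j - \<mu>
     = (of_nat j - of_nat k) * (of_nat j + of_nat k + \<alpha> + \<beta> + 1)"
  using assms by (simp add: algebra_simps)

lemma Jop_val:
  assumes J: "Jop \<alpha> \<beta> Q = smult \<mu> Q" and Q0: "Q \<noteq> 0"
    and nd: "\<And>j. j < degree Q \<Longrightarrow> of_nat j + of_nat (degree Q) + \<alpha> + \<beta> + 1 \<noteq> (0::complex)"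
  shows "poly Q 1 = 0 \<longleftrightarrow> (\<exists>j < degree Q. of_nat j + \<alpha> + 1 = 0)"
    and "poly Q (-1) = 0 \<longleftrightarrow> (\<exists>j < degree Q. of_nat j + \<beta> + 1 = 0)"
proof -
  let ?k = "degree Q"
  have mu: "\<mu> = of_nat ?k * (of_nat ?k + \<alpha> + \<beta> + 1)" using Jop_eig[OF J Q0] .
  have An: "of_nat j * (of_nat j - 1) + (\<alpha> + \<beta> + 2) * of_nat j - \<mu> \<noteq> 0" if "j < ?k" for j
  proof -
    have "of_nat j - of_nat ?k \<noteq> (0::complex)" using that by simp
    then show ?thesis unfolding An_fact[OF mu] using nd[OF that] by simp
  qed
  {
    define P where "P = pcompose Q [:1, 1:]"
    have G: "Gop 2 0 (\<alpha> + \<beta> + 2) (2 * \<alpha> + 2) P = smult \<mu> P"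
      using arg_cong[OF J, of "\<lambda>p. pcompose p [:1,1:]"] unfolding P_def Jop_shift1 by (simp add: pcompose_smult)
    have dP: "degree P = ?k" unfolding P_def by (simp add: degree_pcompose)
    have P0: "P \<noteq> 0" unfolding P_def using Q0 pcompose_eq_0 by fastforce
    have pv: "poly Q 1 = coeff P 0" unfolding P_def by (simp add: poly_0_coeff_0[symmetric] poly_pcompose)
    have "poly Q 1 = 0 \<longleftrightarrow> (\<exists>j < ?k. 2 * of_nat j + (2 * \<alpha> + 2) = 0)"
      unfolding pv using Gop_coeff0[OF G P0] An dP by simp
    also have "\<dots> \<longleftrightarrow> (\<exists>j < ?k. of_nat j + \<alpha> + 1 = 0)"
    proof -
      have e: "(2 * of_nat j + (2 * \<alpha> + 2) = 0) = (of_nat j + \<alpha> + 1 = 0)" for j :: nat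
      proof -
        have "2 * of_nat j + (2 * \<alpha> + 2) = 2 * (of_nat j + \<alpha> + 1)" by (simp add: algebra_simps)
        then show ?thesis by (metis mult_eq_0_iff zero_neq_numeral)
      qed
      show ?thesis by (simp only: e)
    qed
    finally show "poly Q 1 = 0 \<longleftrightarrow> (\<exists>j < degree Q. of_nat j + \<alpha> + 1 = 0)" .
  }
  {
    define P where "P = pcompose Q [:-1, 1:]"
    have G: "Gop (-2) 0 (\<alpha> + \<beta> + 2) (- 2 * \<beta> - 2) P = smult \<mu> P"
      using arg_cong[OF J, of "\<lambda>p. pcompose p [:-1,1:]"] unfolding P_def Jop_shiftm1 by (simp add: pcompose_smult)
    have dP: "degree P = ?k" unfolding P_def by (simp add: degree_pcompose)
    have P0: "P \<noteq> 0" unfolding P_def using Q0 pcompose_eq_0 by fastforce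
    have pv: "poly Q (-1) = coeff P 0" unfolding P_def by (simp add: poly_0_coeff_0[symmetric] poly_pcompose)
    have "poly Q (-1) = 0 \<longleftrightarrow> (\<exists>j < ?k. - 2 * of_nat j + (- 2 * \<beta> - 2) = 0)"
      unfolding pv using Gop_coeff0[OF G P0] An dP by simp
    also have "\<dots> \<longleftrightarrow> (\<exists>j < ?k. of_nat j + \<beta> + 1 = 0)"
    proof -
      have e: "(- 2 * of_nat j + (- 2 * \<beta> - 2) = 0) = (of_nat j + \<beta> + 1 = 0)" for j :: nat
      proof -
        have "- 2 * of_nat j + (- 2 * \<beta> - 2) = - 2 * (of_nat j + \<beta> + 1)" by (simp add: algebra_simps)
        then show ?thesis by (metis mult_eq_0_iff neg_equal_0_iff_equal zero_neq_numeral)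
      qed
      show ?thesis by (simp only: e)
    qed
    finally show "poly Q (-1) = 0 \<longleftrightarrow> (\<exists>j < degree Q. of_nat j + \<beta> + 1 = 0)" .
  }
qed

lemma Jop_smult: "Jop \<alpha> \<beta> (smult c P) = smult c (Jop \<alpha> \<beta> P)"
  by (rule poly_eq_poly_eq_iff[THEN iffD1], rule ext) (simp add: Jop_def pderiv_smult algebra_simps)

lemma Jop_diff: "Jop \<alpha> \<beta> (P - R) = Jop \<alpha> \<beta> P - Jop \<alpha> \<beta> R"
  by (rule poly_eq_poly_eq_iff[THEN iffD1], rule ext) (simp add: Jop_def pderiv_diff algebra_simps)

lemma Jop_unique:
  assumes J1: "Jop \<alpha> \<beta> Q1 = smult \<mu> Q1" and J2: "Jop \<alpha> \<beta> Q2 = smult \<mu> Q2"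
    and Q1: "Q1 \<noteq> 0" and Q2: "Q2 \<noteq> 0" and dg: "degree Q2 = degree Q1"
    and nd: "\<And>j. j < degree Q1 \<Longrightarrow> of_nat j + of_nat (degree Q1) + \<alpha> + \<beta> + 1 \<noteq> (0::complex)"
  shows "Q2 = smult (lead_coeff Q2 / lead_coeff Q1) Q1"
proof -
  let ?k = "degree Q1"
  define R where "R = smult (lead_coeff Q1) Q2 - smult (lead_coeff Q2) Q1"
  have JR: "Jop \<alpha> \<beta> R = smult \<mu> R"
    unfolding R_def Jop_diff Jop_smult J1 J2
    by (rule poly_eq_poly_eq_iff[THEN iffD1], rule ext) (simp add: algebra_simps)
  have R0: "R = 0"
  proof (rule ccontr)
    assume R0: "R \<noteq> 0"
    have "degree R \<le> ?k" unfolding R_def using dg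
      by (metis degree_diff_le degree_smult_le le_trans)
    moreover have "coeff R ?k = 0" unfolding R_def using dg by simp
    ultimately have lt: "degree R < ?k" using R0 by (metis le_neq_implies_less leading_coeff_0_iff)
    have "\<mu> = of_nat (degree R) * (of_nat (degree R) + \<alpha> + \<beta> + 1)" using Jop_eig[OF JR R0] .
    moreover have "\<mu> = of_nat ?k * (of_nat ?k + \<alpha> + \<beta> + 1)" using Jop_eig[OF J1 Q1] .
    ultimately have "(of_nat (degree R) - of_nat ?k) * (of_nat (degree R) + of_nat ?k + \<alpha> + \<beta> + 1) = (0::complex)"
      by (simp add: algebra_simps)
    moreover have "of_nat (degree R) - of_nat ?k \<noteq> (0::complex)" using lt by simp
    ultimately show False using nd[OF lt] by simp
  qed
  have l1: "lead_coeff Q1 \<noteq> 0" using Q1 by simp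
  have "smult (lead_coeff Q1) Q2 = smult (lead_coeff Q2) Q1" using R0 unfolding R_def by simp
  then have "smult (inverse (lead_coeff Q1)) (smult (lead_coeff Q1) Q2) = smult (inverse (lead_coeff Q1)) (smult (lead_coeff Q2) Q1)" by simp
  then show ?thesis using l1 by (simp add: field_simps)
qed

lemma pcomp_inj: "pcompose X [:1, 1:] = pcompose Y [:1, 1:] \<Longrightarrow> X = (Y::complex poly)"
proof -
  assume h: "pcompose X [:1, 1:] = pcompose Y [:1, 1:]"
  have "pcompose (pcompose X [:1, 1:]) [:-1, 1:] = pcompose (pcompose Y [:1, 1:]) [:-1, 1:]" using h by simp
  then show ?thesis by (simp add: pcompose_assoc[symmetric] pcompose_pCons)
qed

lemma Jop_exists:
  assumes nd: "\<And>j. j < k \<Longrightarrow> of_nat j + of_nat k + \<alpha> + \<beta> + 1 \<noteq> (0::complex)"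
  shows "\<exists>Q. Q \<noteq> 0 \<and> degree Q = k \<and> Jop \<alpha> \<beta> Q = smult (of_nat k * (of_nat k + \<alpha> + \<beta> + 1)) Q"
proof -
  define \<mu> where "\<mu> = of_nat k * (of_nat k + \<alpha> + \<beta> + 1)"
  define u where "u = \<alpha> + \<beta> + 2"
  define v where "v = 2 * \<alpha> + 2"
  define Af where "Af = (\<lambda>j::nat. of_nat j * (of_nat j - 1) + u * of_nat j - \<mu>)"
  define Bf where "Bf = (\<lambda>j::nat. of_nat (j + 1) * (2 * of_nat j + v))"
  define dn where "dn = rec_nat (1::complex) (\<lambda>i d. - Bf (k - Suc i) * d / Af (k - Suc i))"
  have dn0: "dn 0 = 1" and dnS: "\<And>i. dn (Suc i) = - Bf (k - Suc i) * dn i / Af (k - Suc i)"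
    unfolding dn_def by simp_all
  define cf where "cf = (\<lambda>j. if j \<le> k then dn (k - j) else 0)"
  define P where "P = (\<Sum>j\<le>k. monom (cf j) j)"
  have cP: "coeff P n = cf n" for n
    unfolding P_def by (simp add: coeff_sum cf_def)
  have Afn: "Af j \<noteq> 0" if "j < k" for j
  proof -
    have "Af j = (of_nat j - of_nat k) * (of_nat j + of_nat k + \<alpha> + \<beta> + 1)"
      unfolding Af_def u_def using An_fact[of \<mu> k \<alpha> \<beta> j] \<mu>_def by simp
    moreover have "of_nat j - of_nat k \<noteq> (0::complex)" using that by simp
    ultimately show ?thesis using nd[OF that] by simp
  qed
  have Ak: "Af k = 0" unfolding Af_def u_def \<mu>_def by (simp add: algebra_simps)
  have recP: "Af n * coeff P n + Bf n * coeff P (Suc n) = 0" for n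
  proof (cases "n < k")
    case True
    define i where "i = k - Suc n"
    have ki: "k - n = Suc i" and kin: "k - Suc i = n" using True i_def by auto
    have "coeff P n = - Bf n * dn i / Af n" unfolding cP cf_def using True ki kin dnS[of i] by simp
    moreover have "coeff P (Suc n) = dn i" unfolding cP cf_def using True i_def by simp
    ultimately show ?thesis using Afn[OF True] by simp
  next
    case False
    then show ?thesis using Ak unfolding cP cf_def by (cases "n = k") auto
  qed
  have GP: "Gop 2 0 u v P = smult \<mu> P"
  proof (rule poly_eqI)
    fix n
    have "coeff (Gop 2 0 u v P) n - coeff (smult \<mu> P) n = Af n * coeff P n + Bf n * coeff P (Suc n)"
      unfolding coeff_Gop Af_def Bf_def by (simp add: algebra_simps)
    then show "coeff (Gop 2 0 u v P) n = coeff (smult \<mu> P) n" using recP[of n] by simp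
  qed
  have ck: "coeff P k = 1" unfolding cP cf_def using dn0 by simp
  have dP: "degree P = k"
  proof (rule antisym)
    show "degree P \<le> k" by (rule degree_le) (simp add: cP cf_def)
    show "k \<le> degree P" using ck by (simp add: le_degree)
  qed
  define Q where "Q = pcompose P [:-1, 1:]"
  have PQ: "pcompose Q [:1, 1:] = P" unfolding Q_def by (simp add: pcompose_assoc[symmetric] pcompose_pCons)
  have "pcompose (Jop \<alpha> \<beta> Q) [:1, 1:] = pcompose (smult \<mu> Q) [:1, 1:]"
    unfolding Jop_shift1 PQ pcompose_smult using GP u_def v_def by simp
  then have JQ: "Jop \<alpha> \<beta> Q = smult \<mu> Q" by (rule pcomp_inj)
  have dQ: "degree Q = k" unfolding Q_def using dP by (simp add: degree_pcompose)
  have Q0: "Q \<noteq> 0" using PQ ck by auto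
  show ?thesis using JQ dQ Q0 \<mu>_def by blast
qed

lemma reval_Fract:
  assumes d0: "d \<noteq> 0" and w: "w = Fract n d" and dx: "poly d x \<noteq> 0"
  shows "reval w x = poly n x / poly d x"
proof -
  have e: "rnum w * d = n * rden w" using rnum_rel[OF d0 w] .
  have rx: "poly (rden w) x \<noteq> 0" using rden_poly_nz[OF d0 w dx] .
  have "poly (rnum w) x * poly d x = poly n x * poly (rden w) x"
    using arg_cong[OF e, of "\<lambda>p. poly p x"] by simp
  then show ?thesis unfolding reval_def using rx dx by (simp add: field_simps)
qed

lemma ev_nz: "(D::complex poly) \<noteq> 0 \<Longrightarrow> eventually (\<lambda>x. poly D x \<noteq> 0) at_infinity"
proof -
  assume D0: "D \<noteq> 0"
  have "finite {x. poly D x = 0}" using poly_roots_finite[OF D0] .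
  then have "bounded {x. poly D x = 0}" by (rule finite_imp_bounded)
  then obtain b where b: "\<forall>x\<in>{x. poly D x = 0}. norm x \<le> b" using bounded_iff by blast
  show ?thesis unfolding eventually_at_infinity
  proof (rule exI[of _ "b + 1"], intro allI impI)
    fix x :: complex assume "b + 1 \<le> norm x"
    then show "poly D x \<noteq> 0" using b by force
  qed
qed

lemma ratio_lim:
  fixes N D :: "complex poly"
  assumes D0: "D \<noteq> 0" and dg: "degree N = degree D"
  shows "((\<lambda>x. poly N x / poly D x) \<longlongrightarrow> lead_coeff N / lead_coeff D) at_infinity"
proof -
  define g where "g = (\<lambda>z. poly (reflect_poly N) z / poly (reflect_poly D) z)"
  have rN: "poly (reflect_poly N) 0 = lead_coeff N" by (simp only: poly_0_coeff_0 coeff_0_reflect_poly)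
  have rD: "poly (reflect_poly D) 0 = lead_coeff D" by (simp only: poly_0_coeff_0 coeff_0_reflect_poly)
  have g0: "g 0 = lead_coeff N / lead_coeff D" unfolding g_def rN rD ..
  have "isCont g 0" unfolding g_def using D0 by (intro continuous_intros) (simp only: rD, simp)
  then have lim: "((\<lambda>x. g (inverse x)) \<longlongrightarrow> g 0) at_infinity"
    by (rule isCont_tendsto_compose) (rule tendsto_inverse_0)
  have ev: "eventually (\<lambda>x. g (inverse x) = poly N x / poly D x) at_infinity"
  proof -
    have "eventually (\<lambda>x::complex. x \<noteq> 0) at_infinity" unfolding eventually_at_infinity
      by (rule exI[of _ 1]) auto
    then show ?thesis
    proof (rule eventually_mono)
      fix x :: complex assume x0: "x \<noteq> 0"
      have ix: "inverse x \<noteq> 0" using x0 by simp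
      have "g (inverse x) = (inverse x ^ degree N * poly N x) / (inverse x ^ degree D * poly D x)"
        unfolding g_def using poly_reflect_poly_nz[OF ix, of N] poly_reflect_poly_nz[OF ix, of D] by simp
      also have "\<dots> = poly N x / poly D x" using dg ix by simp
      finally show "g (inverse x) = poly N x / poly D x" .
    qed
  qed
  show ?thesis using tendsto_cong[OF ev] lim g0 by simp
qed

lemma mty_lin:
  assumes i: "i \<in> {1,2,3,4}" and B0: "B \<noteq> 0" and AB: "A + B \<noteq> 0"
  shows "mty A B i = 0 \<or> (degree (mty A B i) = 1 \<and> coeff (mty A B i) 1 \<noteq> 0)"
proof -
  have "- A - B \<noteq> 0" using AB by (metis add_uminus_conv_diff minus_add_distrib neg_equal_0_iff_equal)
  then show ?thesis using i B0 by (auto simp: mty_def)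
qed

lemma qr_deg_wQ:
  assumes Q0: "Q \<noteq> 0" and i: "i \<in> {1,2,3,4}" and B0: "B \<noteq> 0" and AB: "A + B \<noteq> 0"
  shows "qr_degree (wQ A B i Q) = of_nat (degree Q) + coeff (mty A B i) 1"
proof -
  define m where "m = mty A B i"
  define k where "k = degree Q"
  have pp0: "pp \<noteq> 0" by (simp add: pp_def)
  define h1 where "h1 = (\<lambda>x. poly (pCons 0 (pderiv Q)) x / poly Q x)"
  define h2 where "h2 = (\<lambda>x. poly (pCons 0 m) x / poly pp x)"
  have ev: "eventually (\<lambda>x. x * reval (wQ A B i Q) x = h1 x + h2 x) at_infinity"
    using ev_nz[of "pp * Q"] pp0 Q0
  proof (rule_tac eventually_mono)
    fix x assume nz: "poly (pp * Q) x \<noteq> 0"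
    have "reval (wQ A B i Q) x = poly (pp * pderiv Q + m * Q) x / poly (pp * Q) x"
      unfolding wQ_def m_def by (rule reval_Fract[OF _ refl nz]) (use pp0 Q0 in simp)
    then show "x * reval (wQ A B i Q) x = h1 x + h2 x"
      unfolding h1_def h2_def using nz by (simp add: field_simps)
  qed (use pp0 Q0 in simp)
  have l1: "(h1 \<longlongrightarrow> of_nat k) at_infinity"
  proof (cases "k = 0")
    case True
    then have "pderiv Q = 0" using k_def by (simp add: pderiv_eq_0_iff)
    then show ?thesis using True unfolding h1_def by simp
  next
    case False
    have dQ: "degree (pderiv Q) = k - 1" using k_def by (simp add: degree_pderiv)
    have cQ: "coeff (pderiv Q) (k - 1) = of_nat k * lead_coeff Q"
      using False k_def by (simp add: coeff_pderiv)
    have Q'0: "pderiv Q \<noteq> 0" using False k_def by (simp add: pderiv_eq_0_iff)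
    have dN: "degree (pCons 0 (pderiv Q)) = degree Q" using Q'0 dQ False k_def by simp
    have ck: "coeff (pCons 0 (pderiv Q)) k = coeff (pderiv Q) (k - 1)" using False by (cases k) simp_all
    have lN: "lead_coeff (pCons 0 (pderiv Q)) = of_nat k * lead_coeff Q"
      using dN ck cQ k_def by simp
    have "(h1 \<longlongrightarrow> lead_coeff (pCons 0 (pderiv Q)) / lead_coeff Q) at_infinity"
      unfolding h1_def by (rule ratio_lim[OF Q0 dN])
    then show ?thesis using lN Q0 by simp
  qed
  have l2: "(h2 \<longlongrightarrow> coeff m 1) at_infinity"
  proof (cases "m = 0")
    case True
    then show ?thesis unfolding h2_def by simp
  next
    case False
    then have dm: "degree m = 1" and cm: "coeff m 1 \<noteq> 0" using mty_lin[OF i B0 AB] m_def by auto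
    have dN: "degree (pCons 0 m) = degree pp" using False dm by (simp add: pp_def)
    have lN: "lead_coeff (pCons 0 m) = coeff m 1" using dN by (simp add: pp_def)
    have "(h2 \<longlongrightarrow> lead_coeff (pCons 0 m) / lead_coeff pp) at_infinity"
      unfolding h2_def by (rule ratio_lim[OF pp0 dN])
    then show ?thesis using lN by (simp add: pp_def)
  qed
  have "((\<lambda>x. x * reval (wQ A B i Q) x) \<longlongrightarrow> of_nat k + coeff m 1) at_infinity"
    using tendsto_cong[OF ev] tendsto_add[OF l1 l2] by simp
  then show ?thesis unfolding qr_degree_def m_def k_def
    by (intro tendsto_Lim) (simp_all add: trivial_limit_at_infinity)
qed

definition Rr :: "nat \<Rightarrow> real \<Rightarrow> nat \<Rightarrow> complex poly \<Rightarrow> bool" where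
  "Rr a b i Q \<longleftrightarrow> i \<in> {1,2,3,4} \<and> Q \<noteq> 0 \<and> poly Q 1 \<noteq> 0 \<and> poly Q (-1) \<noteq> 0 \<and>
     (i = 2 \<or> i = 3 \<longrightarrow> degree Q < a) \<and>
     Jop (al (of_nat a) i) (be (complex_of_real b) i) Q
        = smult (lam i (of_nat (degree Q)) (of_nat a) (complex_of_real b) - kap (of_nat a) (complex_of_real b) i) Q"

context
  fixes a :: nat and b :: real
  assumes hb: "b \<notin> \<int>"
begin


lemma nzp: "of_int z + (complex_of_real b) \<noteq> 0"
proof
  assume "of_int z + (complex_of_real b) = 0"
  then have "complex_of_real (of_int z + b) = 0" by simp
  then have "of_int z + b = 0" by (simp only: of_real_eq_0_iff)
  then have "b = of_int (- z)" by simp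
  then show False using hb by simp
qed

lemma nzm: "of_int z - (complex_of_real b) \<noteq> 0"
  using nzp[of "-z"] by (metis add.inverse_distrib_swap minus_diff_eq neg_equal_0_iff_equal of_int_minus uminus_add_conv_diff)

lemma B0: "(complex_of_real b) \<noteq> 0" using nzp[of 0] by simp
lemma AB0: "(of_nat a :: complex) + (complex_of_real b) \<noteq> 0" using nzp[of "int a"] by simp

lemma nd_all:
  assumes i: "i \<in> {1,2,3,4}"
  shows "of_nat j + of_nat k + al (of_nat a :: complex) i + be (complex_of_real b) i + 1 \<noteq> 0"
proof -
  consider "i = 1" | "i = 2" | "i = 3" | "i = 4" using i by auto
  then show ?thesis
  proof cases
    case 1 then show ?thesis using nzp[of "int j + int k + int a + 1"] by (simp add: al_def be_def algebra_simps)
  next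
    case 2 then show ?thesis using nzm[of "int j + int k - int a + 1"] by (simp add: al_def be_def algebra_simps)
  next
    case 3 then show ?thesis using nzp[of "int j + int k - int a + 1"] by (simp add: al_def be_def algebra_simps)
  next
    case 4 then show ?thesis using nzm[of "int j + int k + int a + 1"] by (simp add: al_def be_def algebra_simps)
  qed
qed

lemma lam_eq:
  assumes i: "i \<in> {1,2,3,4}"
  shows "lam i k (of_nat a :: complex) (complex_of_real b) = kap (of_nat a :: complex) (complex_of_real b) i + of_nat k * (of_nat k + al (of_nat a :: complex) i + be (complex_of_real b) i + 1)"
  using i by (auto simp: lam_def kap_def al_def be_def algebra_simps)

lemma val_m1:
  assumes i: "i \<in> {1,2,3,4}" and J: "Jop (al (of_nat a :: complex) i) (be (complex_of_real b) i) Q = smult \<mu> Q" and Q0: "Q \<noteq> 0"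
  shows "poly Q (-1) \<noteq> 0"
proof -
  have "\<not> (of_nat j + be (complex_of_real b) i + 1 = 0)" for j
  proof (cases "i = 1 \<or> i = 3")
    case True then show ?thesis using nzp[of "int j + 1"] by (simp add: be_def algebra_simps)
  next
    case False then show ?thesis using nzm[of "int j + 1"] by (simp add: be_def algebra_simps)
  qed
  then show ?thesis using Jop_val(2)[OF J Q0] nd_all[OF i] by blast
qed

lemma val_1:
  assumes i: "i \<in> {1,2,3,4}" and J: "Jop (al (of_nat a :: complex) i) (be (complex_of_real b) i) Q = smult \<mu> Q" and Q0: "Q \<noteq> 0"
  shows "poly Q 1 \<noteq> 0 \<longleftrightarrow> (i = 2 \<or> i = 3 \<longrightarrow> degree Q < a \<or> a = 0)"
proof -
  have "poly Q 1 = 0 \<longleftrightarrow> (\<exists>j < degree Q. of_nat j + al (of_nat a :: complex) i + 1 = 0)"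
    using Jop_val(1)[OF J Q0] nd_all[OF i] by blast
  also have "\<dots> \<longleftrightarrow> (i = 2 \<or> i = 3) \<and> a \<ge> 1 \<and> degree Q \<ge> a"
  proof
    assume "\<exists>j < degree Q. of_nat j + al (of_nat a :: complex) i + 1 = 0"
    then obtain j where j: "j < degree Q" "of_nat j + al (of_nat a :: complex) i + 1 = 0" by blast
    show "(i = 2 \<or> i = 3) \<and> a \<ge> 1 \<and> degree Q \<ge> a"
    proof (cases "i = 1 \<or> i = 4")
      case True
      then have "of_nat (j + a + 1) = (0::complex)" using j(2) by (simp add: al_def algebra_simps)
      then show ?thesis by (simp only: of_nat_eq_0_iff)
    next
      case False
      then have "of_nat (j + 1) = (of_nat a :: complex)" using j(2) by (simp add: al_def algebra_simps)
      then have "j + 1 = a" by (simp only: of_nat_eq_iff)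
      then show ?thesis using False j(1) i by auto
    qed
  next
    assume h: "(i = 2 \<or> i = 3) \<and> a \<ge> 1 \<and> degree Q \<ge> a"
    then have "a - 1 < degree Q" "of_nat (a - 1) + al (of_nat a :: complex) i + 1 = 0"
      by (auto simp: al_def of_nat_diff)
    then show "\<exists>j < degree Q. of_nat j + al (of_nat a :: complex) i + 1 = 0" by blast
  qed
  finally have e: "poly Q 1 = 0 \<longleftrightarrow> (i = 2 \<or> i = 3) \<and> a \<ge> 1 \<and> degree Q \<ge> a" .
  show ?thesis unfolding e by (cases "i = 2 \<or> i = 3"; cases "a = 0") (simp_all add: not_le)
qed


lemma lam_diff:
  fixes A B :: complex and n k :: nat
  shows "lam 1 n A B - lam 1 k A B = (of_nat n - of_nat k) * (of_nat n + of_nat k + A + B + 1)"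
    and "lam 2 n A B - lam 2 k A B = (of_nat n - of_nat k) * (of_nat n + of_nat k + 1 - A - B)"
    and "lam 4 n A B - lam 4 k A B = (of_nat n - of_nat k) * (of_nat n + of_nat k + A + 1 - B)"
    and "lam 1 n A B - lam 2 k A B = (of_nat n + of_nat k + 1) * (of_nat n - of_nat k + A + B)"
    and "lam 1 n A B - lam 4 k A B = (of_nat n + of_nat k + A + 1) * (of_nat n - of_nat k + B)"
    and "lam 2 n A B - lam 4 k A B = (of_nat n - of_nat k - A) * (of_nat n + of_nat k + 1 - B)"
    and "lam 2 n A B - lam 3 k A B = (of_nat n + of_nat k + 1 - A) * (of_nat n - of_nat k - B)"
  by (simp_all add: lam_def algebra_simps)

lemma lam_F1: "lam 1 (of_nat n) (of_nat a) (complex_of_real b) = lam 1 (of_nat k) (of_nat a) (complex_of_real b) \<Longrightarrow> n = k"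
proof -
  assume h: "lam 1 (of_nat n) (of_nat a) (complex_of_real b) = lam 1 (of_nat k) (of_nat a) (complex_of_real b)"
  have "(of_nat n - of_nat k) * (of_nat n + of_nat k + of_nat a + complex_of_real b + 1) = 0"
    using lam_diff(1)[of n "of_nat a" "complex_of_real b" k] h by simp
  moreover have "of_nat n + of_nat k + of_nat a + complex_of_real b + 1 \<noteq> 0"
    using nzp[of "int n + int k + int a + 1"] by (simp add: algebra_simps)
  ultimately show "n = k" by simp
qed

lemma lam_F2: "lam 2 (of_nat n) (of_nat a) (complex_of_real b) = lam 2 (of_nat k) (of_nat a) (complex_of_real b) \<Longrightarrow> n = k"
proof -
  assume h: "lam 2 (of_nat n) (of_nat a) (complex_of_real b) = lam 2 (of_nat k) (of_nat a) (complex_of_real b)"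
  have "(of_nat n - of_nat k) * (of_nat n + of_nat k + 1 - of_nat a - complex_of_real b) = 0"
    using lam_diff(2)[of n "of_nat a" "complex_of_real b" k] h by simp
  moreover have "of_nat n + of_nat k + 1 - of_nat a - complex_of_real b \<noteq> 0"
    using nzm[of "int n + int k + 1 - int a"] by (simp add: algebra_simps)
  ultimately show "n = k" by simp
qed

lemma lam_F4: "lam 4 (of_nat n) (of_nat a) (complex_of_real b) = lam 4 (of_nat k) (of_nat a) (complex_of_real b) \<Longrightarrow> n = k"
proof -
  assume h: "lam 4 (of_nat n) (of_nat a) (complex_of_real b) = lam 4 (of_nat k) (of_nat a) (complex_of_real b)"
  have "(of_nat n - of_nat k) * (of_nat n + of_nat k + of_nat a + 1 - complex_of_real b) = 0"
    using lam_diff(3)[of n "of_nat a" "complex_of_real b" k] h by simp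
  moreover have "of_nat n + of_nat k + of_nat a + 1 - complex_of_real b \<noteq> 0"
    using nzm[of "int n + int k + int a + 1"] by (simp add: algebra_simps)
  ultimately show "n = k" by simp
qed

lemma lam_F12: "lam 1 (of_nat n) (of_nat a) (complex_of_real b) \<noteq> lam 2 (of_nat k) (of_nat a) (complex_of_real b)"
proof
  assume h: "lam 1 (of_nat n) (of_nat a) (complex_of_real b) = lam 2 (of_nat k) (of_nat a) (complex_of_real b)"
  have "(of_nat n + of_nat k + 1) * (of_nat n - of_nat k + of_nat a + complex_of_real b) = 0"
    using lam_diff(4)[of n "of_nat a" "complex_of_real b" k] h by simp
  moreover have "of_nat n - of_nat k + of_nat a + complex_of_real b \<noteq> 0"
    using nzp[of "int n - int k + int a"] by (simp add: algebra_simps)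
  moreover have "(of_nat n + of_nat k + 1 :: complex) \<noteq> 0"
    using one_plus_nat_nz[of "n + k"] by (simp add: algebra_simps)
  ultimately show False by simp
qed

lemma lam_F14: "lam 1 (of_nat n) (of_nat a) (complex_of_real b) \<noteq> lam 4 (of_nat k) (of_nat a) (complex_of_real b)"
proof
  assume h: "lam 1 (of_nat n) (of_nat a) (complex_of_real b) = lam 4 (of_nat k) (of_nat a) (complex_of_real b)"
  have "(of_nat n + of_nat k + of_nat a + 1) * (of_nat n - of_nat k + complex_of_real b) = 0"
    using lam_diff(5)[of n "of_nat a" "complex_of_real b" k] h by simp
  moreover have "of_nat n - of_nat k + complex_of_real b \<noteq> 0"
    using nzp[of "int n - int k"] by (simp add: algebra_simps)
  moreover have "(of_nat n + of_nat k + of_nat a + 1 :: complex) \<noteq> 0"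
    using one_plus_nat_nz[of "n + k + a"] by (simp add: algebra_simps)
  ultimately show False by simp
qed

lemma lam_F24: "n < a \<Longrightarrow> lam 2 (of_nat n) (of_nat a) (complex_of_real b) \<noteq> lam 4 (of_nat k) (of_nat a) (complex_of_real b)"
proof
  assume na: "n < a" and h: "lam 2 (of_nat n) (of_nat a) (complex_of_real b) = lam 4 (of_nat k) (of_nat a) (complex_of_real b)"
  have "(of_nat n - of_nat k - of_nat a) * (of_nat n + of_nat k + 1 - complex_of_real b) = 0"
    using lam_diff(6)[of n "of_nat a" "complex_of_real b" k] h by simp
  moreover have "of_nat n + of_nat k + 1 - complex_of_real b \<noteq> 0"
    using nzm[of "int n + int k + 1"] by (simp add: algebra_simps)
  moreover have "(of_nat n - of_nat k - of_nat a :: complex) \<noteq> 0"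
  proof
    assume "(of_nat n - of_nat k - of_nat a :: complex) = 0"
    then have "(of_nat n :: complex) = of_nat (k + a)" by (simp add: algebra_simps)
    then have "n = k + a" by (simp only: of_nat_eq_iff)
    then show False using na by simp
  qed
  ultimately show False by simp
qed

lemma lam_F23: "lam 2 (of_nat n) (of_nat a) (complex_of_real b) = lam 3 (of_nat k) (of_nat a) (complex_of_real b) \<longleftrightarrow> n + k + 1 = a"
proof -
  have d: "lam 2 (of_nat n) (of_nat a) (complex_of_real b) - lam 3 (of_nat k) (of_nat a) (complex_of_real b)
     = (of_nat (n + k + 1) - of_nat a) * (of_nat n - of_nat k - complex_of_real b)"
    using lam_diff(7)[of n "of_nat a" "complex_of_real b" k] by simp
  have nz: "of_nat n - of_nat k - complex_of_real b \<noteq> 0"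
    using nzm[of "int n - int k"] by (simp add: algebra_simps)
  have "lam 2 (of_nat n) (of_nat a) (complex_of_real b) = lam 3 (of_nat k) (of_nat a) (complex_of_real b)
    \<longleftrightarrow> (of_nat (n + k + 1) - of_nat a :: complex) = 0"
    using d nz by (metis eq_iff_diff_eq_0 mult_eq_0_iff)
  also have "\<dots> \<longleftrightarrow> n + k + 1 = a" by (simp only: eq_iff_diff_eq_0[symmetric] of_nat_eq_iff)
  finally show ?thesis .
qed


lemma ric_char:
  "w \<in> Ric (jacobiT (of_nat a) (complex_of_real b)) ev \<longleftrightarrow>
    (\<exists>i Q. Rr a b i Q \<and> w = wQ (of_nat a) (complex_of_real b) i Q \<and> ev = lam i (of_nat (degree Q)) (of_nat a) (complex_of_real b))"
proof
  assume w: "w \<in> Ric (jacobiT (of_nat a) (complex_of_real b)) ev"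
  obtain i Q where i: "i \<in> {1,2,3,4}" and Q0: "Q \<noteq> 0" and Q1: "poly Q 1 \<noteq> 0" and Q2: "poly Q (-1) \<noteq> 0"
    and A0: "i = 2 \<or> i = 3 \<longrightarrow> (of_nat a :: complex) \<noteq> 0" and ww: "w = wQ (of_nat a) (complex_of_real b) i Q"
    and J: "Jop (al (of_nat a) i) (be (complex_of_real b) i) Q = smult (ev - kap (of_nat a) (complex_of_real b) i) Q"
    using classify[OF w] by blast
  have ev: "ev = lam i (of_nat (degree Q)) (of_nat a) (complex_of_real b)"
    using Jop_eig[OF J Q0] lam_eq[OF i, of "degree Q"] by (simp add: algebra_simps)
  have v1: "i = 2 \<or> i = 3 \<longrightarrow> degree Q < a \<or> a = 0" using val_1[OF i J Q0] Q1 by blast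
  have dg: "i = 2 \<or> i = 3 \<longrightarrow> degree Q < a"
  proof
    assume h: "i = 2 \<or> i = 3"
    then have "a \<noteq> 0" using A0 by auto
    then show "degree Q < a" using v1 h by blast
  qed
  have "Rr a b i Q" unfolding Rr_def using i Q0 Q1 Q2 dg J ev by simp
  then show "\<exists>i Q. Rr a b i Q \<and> w = wQ (of_nat a) (complex_of_real b) i Q \<and> ev = lam i (of_nat (degree Q)) (of_nat a) (complex_of_real b)"
    using ww ev by blast
next
  assume "\<exists>i Q. Rr a b i Q \<and> w = wQ (of_nat a) (complex_of_real b) i Q \<and> ev = lam i (of_nat (degree Q)) (of_nat a) (complex_of_real b)"
  then obtain i Q where R: "Rr a b i Q" and ww: "w = wQ (of_nat a) (complex_of_real b) i Q"
    and ev: "ev = lam i (of_nat (degree Q)) (of_nat a) (complex_of_real b)" by blast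
  have i: "i \<in> {1,2,3,4}" and Q0: "Q \<noteq> 0" using R unfolding Rr_def by auto
  have J: "Jop (al (of_nat a) i) (be (complex_of_real b) i) Q = smult (ev - kap (of_nat a) (complex_of_real b) i) Q"
    using R ev unfolding Rr_def by simp
  have "redeq (of_nat a) (complex_of_real b) ev Q (mty (of_nat a) (complex_of_real b) i)"
    using redeq_iff_J[OF i] J by simp
  then show "w \<in> Ric (jacobiT (of_nat a) (complex_of_real b)) ev"
    unfolding ww wQ_def using ric_red[OF Q0] by simp
qed

lemma R_props:
  assumes R: "Rr a b i Q"
  shows "asym_type (wQ (of_nat a) (complex_of_real b) i Q) = i"
    and "qr_degree (wQ (of_nat a) (complex_of_real b) i Q) - dshift i (of_nat a) (complex_of_real b) = of_nat (degree Q)"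
proof -
  have i: "i \<in> {1,2,3,4}" and Q0: "Q \<noteq> 0" and Q1: "poly Q 1 \<noteq> 0" and Q2: "poly Q (-1) \<noteq> 0"
    and dg: "i = 2 \<or> i = 3 \<longrightarrow> degree Q < a" using R unfolding Rr_def by auto
  have A0: "i = 2 \<or> i = 3 \<longrightarrow> (of_nat a :: complex) \<noteq> 0"
  proof
    assume "i = 2 \<or> i = 3"
    then have "degree Q < a" using dg by blast
    then show "(of_nat a :: complex) \<noteq> 0" by simp
  qed
  show "asym_type (wQ (of_nat a) (complex_of_real b) i Q) = i"
    using asym_wQ[OF i Q0 Q1 Q2 A0 B0] .
  have "coeff (mty (of_nat a) (complex_of_real b) i) 1 - dshift i (of_nat a) (complex_of_real b) = 0"
  proof -
    consider "i = 1" | "i = 2" | "i = 3" | "i = 4" using i by blast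
    then show ?thesis by cases (simp_all add: mty_def dshift_def)
  qed
  then show "qr_degree (wQ (of_nat a) (complex_of_real b) i Q) - dshift i (of_nat a) (complex_of_real b) = of_nat (degree Q)"
    using qr_deg_wQ[OF Q0 i B0 AB0] by (simp add: algebra_simps)
qed

lemma R_exists:
  assumes i: "i \<in> {1,2,3,4}" and k: "i = 2 \<or> i = 3 \<longrightarrow> k < a"
  shows "\<exists>Q. Rr a b i Q \<and> degree Q = k"
proof -
  obtain Q where Q0: "Q \<noteq> 0" and dQ: "degree Q = k"
    and J0: "Jop (al (of_nat a) i) (be (complex_of_real b) i) Q
      = smult (of_nat k * (of_nat k + al (of_nat a) i + be (complex_of_real b) i + 1)) Q"
  proof -
    have "\<exists>Q. Q \<noteq> 0 \<and> degree Q = k \<and> Jop (al (of_nat a) i) (be (complex_of_real b) i) Q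
      = smult (of_nat k * (of_nat k + al (of_nat a) i + be (complex_of_real b) i + 1)) Q"
      by (rule Jop_exists) (rule nd_all[OF i])
    then show ?thesis using that by blast
  qed
  have J: "Jop (al (of_nat a) i) (be (complex_of_real b) i) Q
        = smult (lam i (of_nat (degree Q)) (of_nat a) (complex_of_real b) - kap (of_nat a) (complex_of_real b) i) Q"
    unfolding dQ lam_eq[OF i, of k] J0 by simp
  have "i = 2 \<or> i = 3 \<longrightarrow> degree Q < a \<or> a = 0" using k dQ by blast
  then have Q1: "poly Q 1 \<noteq> 0" using val_1[OF i J0 Q0] by blast
  have Q2: "poly Q (-1) \<noteq> 0" using val_m1[OF i J0 Q0] .
  have "Rr a b i Q" unfolding Rr_def using i Q0 Q1 Q2 k dQ J by simp
  then show ?thesis using dQ by blast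
qed

lemma R_unique:
  assumes R1: "Rr a b i Q1" and R2: "Rr a b i Q2" and dg: "degree Q2 = degree Q1"
  shows "wQ (of_nat a) (complex_of_real b) i Q2 = wQ (of_nat a) (complex_of_real b) i Q1"
proof -
  have i: "i \<in> {1,2,3,4}" and Q1: "Q1 \<noteq> 0" and Q2: "Q2 \<noteq> 0" using R1 R2 unfolding Rr_def by auto
  have J1: "Jop (al (of_nat a) i) (be (complex_of_real b) i) Q1
        = smult (lam i (of_nat (degree Q1)) (of_nat a) (complex_of_real b) - kap (of_nat a) (complex_of_real b) i) Q1"
    using R1 unfolding Rr_def by simp
  have J2: "Jop (al (of_nat a) i) (be (complex_of_real b) i) Q2
        = smult (lam i (of_nat (degree Q1)) (of_nat a) (complex_of_real b) - kap (of_nat a) (complex_of_real b) i) Q2"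
    using R2 dg unfolding Rr_def by simp
  define c where "c = lead_coeff Q2 / lead_coeff Q1"
  have QQ: "Q2 = smult c Q1" unfolding c_def by (rule Jop_unique[OF J1 J2 Q1 Q2 dg nd_all[OF i]])
  have c0: "c \<noteq> 0" using QQ Q2 by auto
  have pp0: "pp \<noteq> 0" by (simp add: pp_def)
  have e1: "pp * pderiv (smult c Q1) + mty (of_nat a) (complex_of_real b) i * smult c Q1
     = smult c (pp * pderiv Q1 + mty (of_nat a) (complex_of_real b) i * Q1)"
    by (simp add: pderiv_smult smult_add_right)
  have e2: "pp * smult c Q1 = smult c (pp * Q1)" by simp
  have "Fract (smult c X) (smult c Y) = Fract X Y" if "Y \<noteq> 0" for X Y :: "complex poly"
    using that c0 by (simp add: eq_fract)
  then show ?thesis unfolding wQ_def QQ e1 e2 using Q1 pp0 by simp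
qed


lemma idx:
  assumes i: "i \<in> {1,2,3,4}"
  shows "index_set i (of_nat a) (complex_of_real b) = of_nat ` {k. i = 2 \<or> i = 3 \<longrightarrow> k < a}"
proof (rule set_eqI)
  fix x
  show "x \<in> index_set i (of_nat a) (complex_of_real b) \<longleftrightarrow> x \<in> of_nat ` {k. i = 2 \<or> i = 3 \<longrightarrow> k < a}"
  proof
    assume "x \<in> index_set i (of_nat a) (complex_of_real b)"
    then obtain w ev where x: "x = qr_degree w - dshift i (of_nat a) (complex_of_real b)"
      and w: "w \<in> Ric (jacobiT (of_nat a) (complex_of_real b)) ev" and t: "asym_type w = i"
      unfolding index_set_def by blast
    obtain j Q where R: "Rr a b j Q" and ww: "w = wQ (of_nat a) (complex_of_real b) j Q"
      using w ric_char by blast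
    have ji: "j = i" using R_props(1)[OF R] t ww by simp
    have "x = of_nat (degree Q)" using R_props(2)[OF R] x ww ji by simp
    moreover have "i = 2 \<or> i = 3 \<longrightarrow> degree Q < a" using R ji unfolding Rr_def by blast
    ultimately show "x \<in> of_nat ` {k. i = 2 \<or> i = 3 \<longrightarrow> k < a}" by blast
  next
    assume "x \<in> of_nat ` {k. i = 2 \<or> i = 3 \<longrightarrow> k < a}"
    then obtain k where x: "x = of_nat k" and k: "i = 2 \<or> i = 3 \<longrightarrow> k < a" by blast
    obtain Q where R: "Rr a b i Q" and dQ: "degree Q = k" using R_exists[OF i k] by blast
    have w: "wQ (of_nat a) (complex_of_real b) i Q \<in> Ric (jacobiT (of_nat a) (complex_of_real b)) (lam i (of_nat (degree Q)) (of_nat a) (complex_of_real b))"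
      using ric_char R by blast
    have "x = qr_degree (wQ (of_nat a) (complex_of_real b) i Q) - dshift i (of_nat a) (complex_of_real b)"
      using R_props(2)[OF R] x dQ by simp
    then show "x \<in> index_set i (of_nat a) (complex_of_real b)"
      unfolding index_set_def using w R_props(1)[OF R] by blast
  qed
qed

lemma sig:
  assumes i: "i \<in> {1,2,3,4}"
  shows "sigma_check i (of_nat a) (complex_of_real b) = (\<lambda>k. lam i (of_nat k) (of_nat a) (complex_of_real b)) ` {k. i = 2 \<or> i = 3 \<longrightarrow> k < a}"
  unfolding sigma_check_def idx[OF i] image_image ..

lemma lam32: "k < a \<Longrightarrow> lam 3 (of_nat k) (of_nat a) (complex_of_real b) = lam 2 (of_nat (a - 1 - k)) (of_nat a) (complex_of_real b)"
  using lam_F23[of "a - 1 - k" k] by simp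

lemma lam_cls:
  assumes R: "Rr a b j Q" and i: "i = 1 \<or> i = 4"
    and e: "lam j (of_nat (degree Q)) (of_nat a) (complex_of_real b) = lam i (of_nat k) (of_nat a) (complex_of_real b)"
  shows "j = i \<and> degree Q = k"
proof -
  have j: "j \<in> {1,2,3,4}" and dg: "j = 2 \<or> j = 3 \<longrightarrow> degree Q < a" using R unfolding Rr_def by auto
  consider "j = 1" | "j = 2" | "j = 3" | "j = 4" using j by blast
  then show ?thesis
  proof cases
    case 1
    then show ?thesis using i e lam_F1 lam_F14 by metis
  next
    case 2
    then show ?thesis using i e lam_F12 lam_F24 dg by metis
  next
    case 3
    then have "lam 2 (of_nat (a - 1 - degree Q)) (of_nat a) (complex_of_real b) = lam i (of_nat k) (of_nat a) (complex_of_real b)"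
      using lam32 dg e by simp
    moreover have "a - 1 - degree Q < a" using dg 3 by simp
    ultimately show ?thesis using i lam_F12 lam_F24 by metis
  next
    case 4
    then show ?thesis using i e lam_F14 lam_F4 by metis
  qed
qed

lemma single:
  assumes i: "i = 1 \<or> i = 4" and ev: "ev \<in> sigma_check i (of_nat a) (complex_of_real b)"
  shows "\<exists>w. Ric (jacobiT (of_nat a) (complex_of_real b)) ev = {w} \<and> asym_type w = i"
proof -
  have i4: "i \<in> {1,2,3,4}" using i by auto
  obtain k where evk: "ev = lam i (of_nat k) (of_nat a) (complex_of_real b)"
    using ev sig[OF i4] by auto
  have kk: "i = 2 \<or> i = 3 \<longrightarrow> k < a" using i by auto
  obtain Q0 where R0: "Rr a b i Q0" and d0: "degree Q0 = k" using R_exists[OF i4 kk] by blast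
  define w0 where "w0 = wQ (of_nat a) (complex_of_real b) i Q0"
  have "Ric (jacobiT (of_nat a) (complex_of_real b)) ev = {w0}"
  proof (rule set_eqI)
    fix w
    show "w \<in> Ric (jacobiT (of_nat a) (complex_of_real b)) ev \<longleftrightarrow> w \<in> {w0}"
    proof
      assume "w \<in> Ric (jacobiT (of_nat a) (complex_of_real b)) ev"
      then obtain j Q where R: "Rr a b j Q" and ww: "w = wQ (of_nat a) (complex_of_real b) j Q"
        and e: "ev = lam j (of_nat (degree Q)) (of_nat a) (complex_of_real b)"
        using ric_char by blast
      have "lam j (of_nat (degree Q)) (of_nat a) (complex_of_real b) = lam i (of_nat k) (of_nat a) (complex_of_real b)"
        using e evk by simp
      then have "j = i \<and> degree Q = k" by (rule lam_cls[OF R i])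
      then have "w = w0" using R_unique[OF R0, of Q] R ww w0_def d0 by simp
      then show "w \<in> {w0}" by simp
    next
      assume "w \<in> {w0}"
      then show "w \<in> Ric (jacobiT (of_nat a) (complex_of_real b)) ev"
        using ric_char R0 evk d0 w0_def by blast
    qed
  qed
  then show ?thesis using R_props(1)[OF R0] w0_def by blast
qed

lemma pair:
  assumes ev: "ev \<in> sigma_check 2 (of_nat a) (complex_of_real b)"
  shows "\<exists>w2 w3. Ric (jacobiT (of_nat a) (complex_of_real b)) ev = {w2, w3} \<and> asym_type w2 = 2 \<and> asym_type w3 = 3"
proof -
  obtain k where evk: "ev = lam 2 (of_nat k) (of_nat a) (complex_of_real b)" and ka: "k < a"
    using ev sig[of 2] by auto
  obtain Q2 where R2: "Rr a b 2 Q2" and d2: "degree Q2 = k" using R_exists[of 2 k] ka by auto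
  obtain Q3 where R3: "Rr a b 3 Q3" and d3: "degree Q3 = a - 1 - k" using R_exists[of 3 "a - 1 - k"] ka by auto
  define w2 where "w2 = wQ (of_nat a) (complex_of_real b) 2 Q2"
  define w3 where "w3 = wQ (of_nat a) (complex_of_real b) 3 Q3"
  have ev3: "ev = lam 3 (of_nat (degree Q3)) (of_nat a) (complex_of_real b)"
    using evk lam_F23[of k "a - 1 - k"] ka d3 by simp
  have "Ric (jacobiT (of_nat a) (complex_of_real b)) ev = {w2, w3}"
  proof (rule set_eqI)
    fix w
    show "w \<in> Ric (jacobiT (of_nat a) (complex_of_real b)) ev \<longleftrightarrow> w \<in> {w2, w3}"
    proof
      assume "w \<in> Ric (jacobiT (of_nat a) (complex_of_real b)) ev"
      then obtain j Q where R: "Rr a b j Q" and ww: "w = wQ (of_nat a) (complex_of_real b) j Q"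
        and e: "ev = lam j (of_nat (degree Q)) (of_nat a) (complex_of_real b)"
        using ric_char by blast
      have j: "j \<in> {1,2,3,4}" and dg: "j = 2 \<or> j = 3 \<longrightarrow> degree Q < a" using R unfolding Rr_def by auto
      consider "j = 1" | "j = 2" | "j = 3" | "j = 4" using j by blast
      then show "w \<in> {w2, w3}"
      proof cases
        case 1 then show ?thesis using e evk lam_F12 by metis
      next
        case 4 then show ?thesis using e evk lam_F24 ka by metis
      next
        case 2
        then have "degree Q = k" using e evk lam_F2 by metis
        then have "w = w2" using R_unique[OF R2, of Q] R ww w2_def d2 2 by simp
        then show ?thesis by simp
      next
        case 3
        then have "k + degree Q + 1 = a" using e evk lam_F23 by metis
        then have "degree Q = a - 1 - k" by simp
        then have "w = w3" using R_unique[OF R3, of Q] R ww w3_def d3 3 by simp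
        then show ?thesis by simp
      qed
    next
      assume "w \<in> {w2, w3}"
      then show "w \<in> Ric (jacobiT (of_nat a) (complex_of_real b)) ev"
        using ric_char R2 R3 evk ev3 d2 w2_def w3_def by blast
    qed
  qed
  then show ?thesis using R_props(1)[OF R2] R_props(1)[OF R3] w2_def w3_def by blast
qed

lemma sig23: "sigma_check 2 (of_nat a) (complex_of_real b) = sigma_check 3 (of_nat a) (complex_of_real b)"
proof -
  have "(\<lambda>k. lam 2 (of_nat k) (of_nat a) (complex_of_real b)) ` {k. k < a}
      = (\<lambda>k. lam 3 (of_nat k) (of_nat a) (complex_of_real b)) ` {k. k < a}"
  proof (rule set_eqI, rule iffI)
    fix x assume "x \<in> (\<lambda>k. lam 2 (of_nat k) (of_nat a) (complex_of_real b)) ` {k. k < a}"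
    then obtain k where k: "k < a" "x = lam 2 (of_nat k) (of_nat a) (complex_of_real b)" by blast
    have "x = lam 3 (of_nat (a - 1 - k)) (of_nat a) (complex_of_real b)"
      using k lam32[of "a - 1 - k"] by simp
    moreover have "a - 1 - k < a" using k by simp
    ultimately show "x \<in> (\<lambda>k. lam 3 (of_nat k) (of_nat a) (complex_of_real b)) ` {k. k < a}" by blast
  next
    fix x assume "x \<in> (\<lambda>k. lam 3 (of_nat k) (of_nat a) (complex_of_real b)) ` {k. k < a}"
    then obtain k where k: "k < a" "x = lam 3 (of_nat k) (of_nat a) (complex_of_real b)" by blast
    have "x = lam 2 (of_nat (a - 1 - k)) (of_nat a) (complex_of_real b)"
      using k lam32[of k] by simp
    moreover have "a - 1 - k < a" using k by simp
    ultimately show "x \<in> (\<lambda>k. lam 2 (of_nat k) (of_nat a) (complex_of_real b)) ` {k. k < a}" by blast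
  qed
  then show ?thesis using sig[of 2] sig[of 3] by simp
qed

lemma sigqr: "sigma_qr (jacobiT (of_nat a) (complex_of_real b)) =
   sigma_check 1 (of_nat a) (complex_of_real b) \<union> sigma_check 2 (of_nat a) (complex_of_real b) \<union> sigma_check 4 (of_nat a) (complex_of_real b)"
proof (rule set_eqI, rule iffI)
  fix ev assume "ev \<in> sigma_qr (jacobiT (of_nat a) (complex_of_real b))"
  then obtain w where "w \<in> Ric (jacobiT (of_nat a) (complex_of_real b)) ev" unfolding sigma_qr_def by blast
  then obtain j Q where R: "Rr a b j Q" and e: "ev = lam j (of_nat (degree Q)) (of_nat a) (complex_of_real b)"
    using ric_char by blast
  have j: "j \<in> {1,2,3,4}" and dg: "j = 2 \<or> j = 3 \<longrightarrow> degree Q < a" using R unfolding Rr_def by auto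
  consider "j = 1" | "j = 2" | "j = 3" | "j = 4" using j by blast
  then show "ev \<in> sigma_check 1 (of_nat a) (complex_of_real b) \<union> sigma_check 2 (of_nat a) (complex_of_real b) \<union> sigma_check 4 (of_nat a) (complex_of_real b)"
  proof cases
    case 1 then show ?thesis using e sig[of 1] by auto
  next
    case 2 then show ?thesis using e sig[of 2] dg by auto
  next
    case 3
    then have "ev = lam 2 (of_nat (a - 1 - degree Q)) (of_nat a) (complex_of_real b)" using e lam32 dg by simp
    moreover have "a - 1 - degree Q < a" using dg 3 by simp
    ultimately show ?thesis using sig[of 2] by auto
  next
    case 4 then show ?thesis using e sig[of 4] by auto
  qed
next
  fix ev assume h: "ev \<in> sigma_check 1 (of_nat a) (complex_of_real b) \<union> sigma_check 2 (of_nat a) (complex_of_real b) \<union> sigma_check 4 (of_nat a) (complex_of_real b)"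
  obtain i k where i: "i \<in> {1,2,3,4}" and k: "i = 2 \<or> i = 3 \<longrightarrow> k < a"
    and evk: "ev = lam i (of_nat k) (of_nat a) (complex_of_real b)"
  proof -
    consider "ev \<in> sigma_check 1 (of_nat a) (complex_of_real b)" | "ev \<in> sigma_check 2 (of_nat a) (complex_of_real b)"
      | "ev \<in> sigma_check 4 (of_nat a) (complex_of_real b)" using h by blast
    then show ?thesis
    proof cases
      case 1 then show ?thesis using that[of 1] sig[of 1] by auto
    next
      case 2 then show ?thesis using that[of 2] sig[of 2] by auto
    next
      case 3 then show ?thesis using that[of 4] sig[of 4] by auto
    qed
  qed
  obtain Q where R: "Rr a b i Q" and dQ: "degree Q = k" using R_exists[OF i k] by blast
  have "wQ (of_nat a) (complex_of_real b) i Q \<in> Ric (jacobiT (of_nat a) (complex_of_real b)) ev"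
    using ric_char R evk dQ by blast
  then show "ev \<in> sigma_qr (jacobiT (of_nat a) (complex_of_real b))" unfolding sigma_qr_def by blast
qed

lemma disj:
  "sigma_check 1 (of_nat a) (complex_of_real b) \<inter> sigma_check 2 (of_nat a) (complex_of_real b) = {}"
  "sigma_check 1 (of_nat a) (complex_of_real b) \<inter> sigma_check 4 (of_nat a) (complex_of_real b) = {}"
  "sigma_check 2 (of_nat a) (complex_of_real b) \<inter> sigma_check 4 (of_nat a) (complex_of_real b) = {}"
  using sig[of 1] sig[of 2] sig[of 4] lam_F12 lam_F14 lam_F24 by auto

end

theorem mainTheorem16:
  fixes a :: nat and b :: real
  assumes hb: "b \<notin> \<int>"
  defines "A \<equiv> (of_nat a :: complex)" and "B \<equiv> complex_of_real b"
  shows "index_set 1 A B = of_nat ` UNIV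
    \<and> index_set 4 A B = of_nat ` UNIV
    \<and> index_set 2 A B = of_nat ` {..<a}
    \<and> index_set 3 A B = of_nat ` {..<a}
    \<and> (\<forall>ev\<in>sigma_check 1 A B. \<exists>w. Ric (jacobiT A B) ev = {w} \<and> asym_type w = 1)
    \<and> (\<forall>ev\<in>sigma_check 4 A B. \<exists>w. Ric (jacobiT A B) ev = {w} \<and> asym_type w = 4)
    \<and> sigma_check 2 A B = sigma_check 3 A B
    \<and> (\<forall>ev\<in>sigma_check 2 A B. \<exists>w2 w3. Ric (jacobiT A B) ev = {w2, w3}
          \<and> asym_type w2 = 2 \<and> asym_type w3 = 3)
    \<and> sigma_qr (jacobiT A B) = sigma_check 1 A B \<union> sigma_check 2 A B \<union> sigma_check 4 A B
    \<and> sigma_check 1 A B \<inter> sigma_check 2 A B = {}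
    \<and> sigma_check 1 A B \<inter> sigma_check 4 A B = {}
    \<and> sigma_check 2 A B \<inter> sigma_check 4 A B = {}"
proof -
  have i1: "index_set 1 A B = of_nat ` UNIV" unfolding A_def B_def using idx[OF hb, of 1] by simp
  have i4: "index_set 4 A B = of_nat ` UNIV" unfolding A_def B_def using idx[OF hb, of 4] by simp
  have i2: "index_set 2 A B = of_nat ` {..<a}" unfolding A_def B_def using idx[OF hb, of 2] by (simp add: lessThan_def)
  have i3: "index_set 3 A B = of_nat ` {..<a}" unfolding A_def B_def using idx[OF hb, of 3] by (simp add: lessThan_def)
  have s1: "\<forall>ev\<in>sigma_check 1 A B. \<exists>w. Ric (jacobiT A B) ev = {w} \<and> asym_type w = 1"
    unfolding A_def B_def by (intro ballI, rule single[OF hb]) simp_all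
  have s4: "\<forall>ev\<in>sigma_check 4 A B. \<exists>w. Ric (jacobiT A B) ev = {w} \<and> asym_type w = 4"
    unfolding A_def B_def by (intro ballI, rule single[OF hb]) simp_all
  have s23: "sigma_check 2 A B = sigma_check 3 A B" unfolding A_def B_def by (rule sig23[OF hb])
  have p: "\<forall>ev\<in>sigma_check 2 A B. \<exists>w2 w3. Ric (jacobiT A B) ev = {w2, w3}
          \<and> asym_type w2 = 2 \<and> asym_type w3 = 3"
    unfolding A_def B_def by (intro ballI, rule pair[OF hb])
  have q: "sigma_qr (jacobiT A B) = sigma_check 1 A B \<union> sigma_check 2 A B \<union> sigma_check 4 A B"
    unfolding A_def B_def by (rule sigqr[OF hb])
  have d1: "sigma_check 1 A B \<inter> sigma_check 2 A B = {}" unfolding A_def B_def by (rule disj(1)[OF hb])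
  have d2: "sigma_check 1 A B \<inter> sigma_check 4 A B = {}" unfolding A_def B_def by (rule disj(2)[OF hb])
  have d3: "sigma_check 2 A B \<inter> sigma_check 4 A B = {}" unfolding A_def B_def by (rule disj(3)[OF hb])
  show ?thesis
    by (intro conjI) (rule i1, rule i4, rule i2, rule i3, rule s1, rule s4, rule s23, rule p, rule q, rule d1, rule d2, rule d3)
qed

end
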